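(* Let $n\geqslant 4$ be an integer and let $\alpha,\beta$ be real with $\alpha>-1$ and $n+\alpha+\beta>0$. Then the zeros of $\phi_n^{(\alpha,\beta)}$ and $\phi_{n-1}^{(\alpha,\beta)}$ are all negative and interlace non-strictly if and only if $\phi_n^{(\alpha,\beta-1)}$ has only real zeros; and they are all negative and interlace strictly if and only if $\phi_n^{(\alpha,\beta-1)}$ has only simple real zeros. Moreover, if $\phi_n^{(\alpha,\beta-1)}$ has only real zeros, then $\mathbf{zr}_1\big(\phi_{n-1}^{(\alpha,\beta)}\big)\leqslant\mathbf{zr}_1\big(\phi_{n}^{(\alpha,\beta)}\big)$.
   Context: For real $a$ and integer $m\geqslant0$, $(a)_m=a(a+1)\cdots(a+m-1)$, $(a)_0=1$. For real $\alpha,\beta$ with $\alpha>-1$, the Jacobi polynomial is $$P_n^{(\alpha,\beta)}(x)=\frac{(\alpha+1)_n}{n!}\sum_{k=0}^{n}\frac{(-n)_k(n+\alpha+\beta+1)_k}{k!\,(\alpha+1)_k}\Big(\frac{1-x}{2}\Big)^k ,$$ and $$\phi_n^{(\alpha,\beta)}(\mu)=\sum_{k=0}^{[n/2]}\Big(\tfrac{d^{2k}}{dx^{2k}}P_n^{(\alpha,\beta)}(x)\Big)\Big|_{x=1}\mu^k=\frac{(\alpha+1)_n}{n!}\sum_{k=0}^{[n/2]}\frac{(-n)_{2k}(n+\alpha+\beta+1)_{2k}}{(\alpha+1)_{2k}}\Big(\frac{\mu}{4}\Big)^k .$$ Two real polynomials $g,h$ interlace strictly if all their zeros are real, simple and mutually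 distinct, and between any two consecutive zeros of either polynomial there is exactly one zero of the other. They interlace non-strictly if all their zeros are real and $g/\gcd(g,h)$, $h/\gcd(g,h)$ interlace strictly. For a polynomial $p$ with real zeros, $\mathbf{zr}_i(p)$ denotes its $i$-th zero counted in order of increasing distance from the origin; $\mathbf{zr}_i(p)=-\infty$ if $\deg p<i$, and $\mathbf{zr}_0(p)=0$. *)

theory Defs
  imports "HOL-Computational_Algebra.Polynomial_Factorial" "HOL-Computational_Algebra.Field_as_Ring" "HOL-Library.Extended_Real"
begin

definition phi :: "nat \<Rightarrow> real \<Rightarrow> real \<Rightarrow> real poly" where
  "phi n a b = (\<Sum>k\<le>n div 2.
     monom (pochhammer (a + 1) n / fact n *
            (pochhammer (- real n) (2*k) * pochhammer (real n + a + b + 1) (2*k)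
              / pochhammer (a + 1) (2*k)) * (1/4) ^ k) k)"

definition real_rooted :: "real poly \<Rightarrow> bool" where
  "real_rooted p \<longleftrightarrow> (\<forall>z::complex. poly (map_poly complex_of_real p) z = 0 \<longrightarrow> z \<in> \<real>)"

definition neg_zeros :: "real poly \<Rightarrow> bool" where
  "neg_zeros p \<longleftrightarrow> (\<forall>x::real. poly p x = 0 \<longrightarrow> x < 0)"

definition one_between :: "real poly \<Rightarrow> real poly \<Rightarrow> bool" where
  "one_between g h \<longleftrightarrow>
     (\<forall>a b. a < b \<and> poly g a = 0 \<and> poly g b = 0 \<and> (\<forall>x. a < x \<and> x < b \<longrightarrow> poly g x \<noteq> 0)
        \<longrightarrow> card {x. a < x \<and> x < b \<and> poly h x = 0} = 1)"

definition interlace_strict :: "real poly \<Rightarrow> real poly \<Rightarrow> bool" where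
  "interlace_strict g h \<longleftrightarrow>
     real_rooted g \<and> real_rooted h \<and> rsquarefree g \<and> rsquarefree h \<and>
     (\<forall>x. \<not> (poly g x = 0 \<and> poly h x = 0)) \<and>
     one_between g h \<and> one_between h g"

definition interlace_nonstrict :: "real poly \<Rightarrow> real poly \<Rightarrow> bool" where
  "interlace_nonstrict g h \<longleftrightarrow>
     real_rooted g \<and> real_rooted h \<and>
     interlace_strict (g div gcd g h) (h div gcd g h)"

text \<open>zr p i: i-th zero (with multiplicity) in order of increasing distance from the
  origin (ties: negative zero first); -infinity if degree p < i; zr p 0 = 0.\<close>
definition zr :: "real poly \<Rightarrow> nat \<Rightarrow> ereal" where
  "zr p i = (if i = 0 then 0 else if degree p < i then -\<infinity>
             else ereal (sort_key abs (sorted_list_of_multiset (proots p)) ! (i - 1)))"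

end

theory Submission
  imports Defs "HOL-Computational_Algebra.Fundamental_Theorem_Algebra"
begin

abbreviation cpoly :: "real poly \<Rightarrow> complex poly" where
  "cpoly p \<equiv> map_poly complex_of_real p"

lemma cpoly_mult: "cpoly (p * q) = cpoly p * cpoly q"
  by (intro poly_eqI) (simp add: coeff_map_poly coeff_mult of_real_sum)

lemma cpoly_of_real: "poly (cpoly p) (of_real x) = of_real (poly p x)"
  by (induction p) (auto simp: map_poly_pCons)

lemma cpoly_degree: "degree (cpoly p) = degree p"
  by (rule degree_map_poly) simp

lemma cpoly_eq_0: "cpoly p = 0 \<longleftrightarrow> p = 0"
  by (metis coeff_map_poly leading_coeff_0_iff of_real_0 of_real_eq_0_iff cpoly_degree)

lemma real_rooted_mult:
  assumes "real_rooted p" "real_rooted q"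
  shows "real_rooted (p * q)"
  using assms unfolding real_rooted_def by (auto simp: cpoly_mult)

lemma real_rooted_dvd:
  assumes "real_rooted p" "q dvd p" "p \<noteq> 0"
  shows "real_rooted q"
proof -
  from assms(2) obtain r where "p = q * r" by auto
  show ?thesis unfolding real_rooted_def
  proof (intro allI impI)
    fix z assume "poly (cpoly q) z = 0"
    then have "poly (cpoly p) z = 0" using \<open>p = q * r\<close> by (simp add: cpoly_mult)
    then show "z \<in> \<real>" using assms(1) unfolding real_rooted_def by blast
  qed
qed

lemma real_rooted_deg1:
  assumes "degree p \<le> 1" "p \<noteq> 0"
  shows "real_rooted p"
  unfolding real_rooted_def
proof (intro allI impI)
  fix z :: complex assume z: "poly (cpoly p) z = 0"
  show "z \<in> \<real>"
  proof (cases "degree p = 0")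
    case True
    then obtain c where "p = [:c:]" by (metis degree_eq_zeroE)
    with z assms show ?thesis by (simp add: map_poly_pCons)
  next
    case False
    with assms have d1: "degree p = 1" by simp
    then have c1: "coeff p 1 \<noteq> 0" by (metis leading_coeff_0_iff one_neq_zero assms(2))
    have "poly p = (\<lambda>x. coeff p 0 + coeff p 1 * x)" using d1
      by (simp add: poly_altdef fun_eq_iff)
    have "poly (cpoly p) z = of_real (coeff p 0) + of_real (coeff p 1) * z"
      using d1 by (simp add: poly_altdef cpoly_degree coeff_map_poly)
    with z have "z = - of_real (coeff p 0) / of_real (coeff p 1)"
      using c1 by (simp add: field_simps add_eq_0_iff)
    then show ?thesis by simp
  qed
qed

lemma real_rooted_has_root:
  assumes "real_rooted p" "degree p \<ge> 1"
  shows "\<exists>x. poly p x = 0"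
proof -
  have "\<not> constant (poly (cpoly p))" using assms by (simp add: constant_degree cpoly_degree)
  then obtain z where z: "poly (cpoly p) z = 0" using fundamental_theorem_of_algebra by blast
  with assms have "z \<in> \<real>" unfolding real_rooted_def by auto
  then obtain x where "z = of_real x" by (auto elim: Reals_cases)
  with z show ?thesis by (auto simp: cpoly_of_real)
qed

lemma prod_linear_dvd:
  fixes p :: "real poly"
  assumes "finite S" "\<forall>r\<in>S. poly p r = 0"
  shows "\<exists>q. p = (\<Prod>r\<in>S. [:-r,1:]) * q"
  using assms
proof (induction S arbitrary: p rule: finite_induct)
  case empty then show ?case by simp
next
  case (insert r S)
  then have "[:-r,1:] dvd p" by (simp add: poly_eq_0_iff_dvd)
  then obtain q where q: "p = [:-r,1:] * q" by (elim dvdE)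
  have "\<forall>x\<in>S. poly q x = 0"
  proof
    fix x assume "x \<in> S"
    with insert have "poly p x = 0" "x \<noteq> r" by auto
    with q show "poly q x = 0" by simp
  qed
  with insert.IH obtain q' where "q = (\<Prod>r\<in>S. [:-r,1:]) * q'" by blast
  with q insert show ?case by (auto simp: mult_ac)
qed

lemma degree_prod_linear: "finite S \<Longrightarrow> degree (\<Prod>r\<in>S. [:-r,1::real:]) = card S"
proof -
  assume "finite S"
  have "degree (\<Prod>r\<in>S. [:-r,1::real:]) = (\<Sum>r\<in>S. degree [:-r,1::real:])"
    by (rule degree_prod_sum_eq) simp
  then show ?thesis by simp
qed

lemma lead_coeff_prod_linear: "lead_coeff (\<Prod>r\<in>S. [:-r,1::real:]) = 1"
  by (simp add: lead_coeff_prod)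

lemma prod_linear_nz: "(\<Prod>r\<in>S. [:-r,1::real:]) \<noteq> 0"
  by (metis lead_coeff_prod_linear leading_coeff_0_iff one_neq_zero)

lemma split_roots:
  fixes p :: "real poly"
  assumes "p \<noteq> 0" "finite S" "\<forall>r\<in>S. poly p r = 0" "card S \<ge> degree p"
  shows "p = smult (lead_coeff p) (\<Prod>r\<in>S. [:-r,1:]) \<and> card S = degree p"
proof -
  obtain q where q: "p = (\<Prod>r\<in>S. [:-r,1:]) * q" using prod_linear_dvd assms by blast
  have qnz: "q \<noteq> 0" using q assms by auto
  have "degree p = card S + degree q" using q qnz assms(2)
    by (simp add: degree_mult_eq prod_linear_nz degree_prod_linear)
  with assms have "degree q = 0" by simp
  then obtain c where c: "q = [:c:]" by (metis degree_eq_zeroE)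
  have pc: "p = smult c (\<Prod>r\<in>S. [:-r,1:])" using q c by simp
  have "lead_coeff p = c" unfolding pc lead_coeff_smult lead_coeff_prod_linear by simp
  have "card S = degree p" using \<open>degree p = card S + degree q\<close> \<open>degree q = 0\<close> by simp
  moreover have "p = smult (lead_coeff p) (\<Prod>r\<in>S. [:-r,1:])"
    unfolding \<open>lead_coeff p = c\<close> by (rule pc)
  ultimately show ?thesis by blast
qed

lemma real_rooted_many_roots:
  fixes p :: "real poly"
  assumes "p \<noteq> 0" "finite S" "\<forall>r\<in>S. poly p r = 0" "card S + 1 \<ge> degree p"
  shows "real_rooted p"
proof -
  obtain q where q: "p = (\<Prod>r\<in>S. [:-r,1:]) * q" using prod_linear_dvd assms by blast
  have qnz: "q \<noteq> 0" using q assms by auto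
  have "degree p = card S + degree q" using q qnz assms(2)
    by (simp add: degree_mult_eq prod_linear_nz degree_prod_linear)
  with assms have "degree q \<le> 1" by simp
  then have "real_rooted q" using qnz real_rooted_deg1 by blast
  moreover have "real_rooted (\<Prod>r\<in>S. [:-r,1:])"
    using assms(2)
  proof (induction S rule: finite_induct)
    case empty then show ?case by (simp add: real_rooted_def)
  next
    case (insert x S)
    have "real_rooted [:-x,1:]" by (rule real_rooted_deg1) auto
    then show ?case unfolding prod.insert[OF insert(1,2)]
      using insert(3) real_rooted_mult by blast
  qed
  ultimately show ?thesis using q real_rooted_mult by simp
qed



lemma roots_finite: "(p::real poly) \<noteq> 0 \<Longrightarrow> finite {x. poly p x = 0}"
  by (rule poly_roots_finite)

lemma order2_dvd:
  fixes p :: "real poly"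
  assumes "[:-x,1:] dvd a" "[:-x,1:] dvd b" "p = a * b" "p \<noteq> 0"
  shows "order x p \<ge> 2"
proof -
  have "[:-x,1:]^2 dvd p" using assms(1-3) by (metis mult_dvd_mono power2_eq_square)
  then show ?thesis using assms(4) by (simp add: order_divides)
qed

lemma rr_sqf_card:
  fixes p :: "real poly"
  assumes "real_rooted p" "rsquarefree p"
  shows "card {x. poly p x = 0} = degree p"
proof -
  have pnz: "p \<noteq> 0" using assms by (simp add: rsquarefree_def)
  define S where "S = {x. poly p x = 0}"
  have fin: "finite S" using pnz by (simp add: S_def poly_roots_finite)
  obtain q where q: "p = (\<Prod>r\<in>S. [:-r,1:]) * q" using prod_linear_dvd[OF fin] by (auto simp: S_def)
  have qnz: "q \<noteq> 0" using q pnz by auto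
  have dp: "degree p = card S + degree q" using q qnz fin
    by (simp add: degree_mult_eq prod_linear_nz degree_prod_linear)
  have "degree q = 0"
  proof (rule ccontr)
    assume "degree q \<noteq> 0"
    moreover have "real_rooted q" using real_rooted_dvd[OF assms(1) _ pnz] q by simp
    ultimately obtain x where x: "poly q x = 0" using real_rooted_has_root by fastforce
    have "poly p x = 0" by (subst q) (simp add: x)
    then have "x \<in> S" by (simp add: S_def)
    then have "[:-x,1:] dvd (\<Prod>r\<in>S. [:-r,1:])" using fin by (intro dvd_prodI)
    moreover have "[:-x,1:] dvd q" using x by (simp add: poly_eq_0_iff_dvd)
    ultimately have "order x p \<ge> 2" using order2_dvd q pnz by blast
    with assms(2) show False unfolding rsquarefree_def by (metis numeral_le_one_iff semiring_norm(69) zero_le_numeral le_zero_eq one_le_numeral nat.simps(3) numeral_2_eq_2 not_less_eq_eq)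
  qed
  with dp show ?thesis by (simp add: S_def)
qed

lemma rr_sqf_prod:
  fixes p :: "real poly"
  assumes "real_rooted p" "rsquarefree p"
  shows "p = smult (lead_coeff p) (\<Prod>r\<in>{x. poly p x = 0}. [:-r,1:])"
proof -
  have pnz: "p \<noteq> 0" using assms by (simp add: rsquarefree_def)
  show ?thesis using split_roots[OF pnz poly_roots_finite[OF pnz]] rr_sqf_card[OF assms] by auto
qed

lemma prod_form_roots:
  fixes p :: "real poly"
  assumes "p = smult c (\<Prod>r\<in>S. [:-r,1:])" "c \<noteq> 0" "finite S"
  shows "{x. poly p x = 0} = S"
  using assms by (auto simp: poly_prod)

lemma prod_form_props:
  fixes p :: "real poly"
  assumes "p = smult c (\<Prod>r\<in>S. [:-r,1:])" "c \<noteq> 0" "finite S"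
  shows "real_rooted p \<and> rsquarefree p \<and> degree p = card S"
proof -
  have pnz: "p \<noteq> 0" using assms prod_linear_nz by simp
  have roots: "{x. poly p x = 0} = S" using prod_form_roots[OF assms] .
  have dp: "degree p = card S" using assms by (simp add: degree_prod_linear)
  have rr: "real_rooted p"
    by (rule real_rooted_many_roots[OF pnz assms(3)]) (use roots dp in auto)
  have "\<forall>a. order a p = 0 \<or> order a p = 1"
  proof
    fix a
    show "order a p = 0 \<or> order a p = 1"
    proof (rule ccontr)
      assume "\<not> ?thesis"
      then have "order a p \<ge> 2" by linarith
      then have "[:-a,1:]^2 dvd p" by (simp add: order_divides)
      then obtain r where r0: "p = [:-a,1:]^2 * r" by (elim dvdE)
      then have r: "p = [:-a,1:] * ([:-a,1:] * r)" unfolding power2_eq_square by (simp only: mult.assoc)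
      define u where "u = [:-a,1:] * r"
      have unz: "u \<noteq> 0" using r pnz u_def by auto
      have "p = [:-a,1:] * u" using r u_def by simp
      moreover have "degree ([:-a,1:] * u) = degree [:-a,1::real:] + degree u"
        by (rule degree_mult_eq) (use unz in auto)
      ultimately have "degree p = degree u + 1" by simp
      then have du: "degree u + 1 = card S" using dp by simp
      have "S \<subseteq> {x. poly u x = 0}"
      proof
        fix y assume "y \<in> S"
        with roots have "poly p y = 0" by auto
        then show "y \<in> {x. poly u x = 0}" using r by (auto simp: u_def)
      qed
      then have "card S \<le> card {x. poly u x = 0}" using poly_roots_finite[OF unz] by (rule card_mono[rotated])
      also have "\<dots> \<le> degree u" using card_poly_roots_bound[OF unz] .
      finally show False using du by simp
    qed
  qed
  then have "rsquarefree p" using pnz by (simp add: rsquarefree_def)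
  with rr dp show ?thesis by simp
qed

lemma sign_prod_linear:
  fixes x :: real
  assumes "finite S" "x \<notin> S"
  shows "(\<Prod>r\<in>S. (x - r)) * (-1)^card {r\<in>S. x < r} > 0"
  using assms
proof (induction S rule: finite_induct)
  case empty then show ?case by simp
next
  case (insert y S)
  have IH: "(\<Prod>r\<in>S. (x - r)) * (-1)^card {r\<in>S. x < r} > 0" using insert by simp
  have xy: "x \<noteq> y" using insert by auto
  show ?case
  proof (cases "x < y")
    case True
    have "{r\<in>insert y S. x < r} = insert y {r\<in>S. x < r}" using True by auto
    moreover have "y \<notin> {r\<in>S. x < r}" using insert by auto
    ultimately have c: "card {r\<in>insert y S. x < r} = Suc (card {r\<in>S. x < r})" using insert by simp
    have "(\<Prod>r\<in>insert y S. (x - r)) * (-1)^card {r\<in>insert y S. x < r}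
        = (y - x) * ((\<Prod>r\<in>S. (x - r)) * (-1)^card {r\<in>S. x < r})"
      unfolding c using insert by (simp add: algebra_simps)
    then show ?thesis using IH True by simp
  next
    case False
    with xy have "y < x" by simp
    have "{r\<in>insert y S. x < r} = {r\<in>S. x < r}" using \<open>y < x\<close> by auto
    then have "(\<Prod>r\<in>insert y S. (x - r)) * (-1)^card {r\<in>insert y S. x < r}
        = (x - y) * ((\<Prod>r\<in>S. (x - r)) * (-1)^card {r\<in>S. x < r})"
      using insert by (simp add: algebra_simps)
    then show ?thesis using IH \<open>y < x\<close> by simp
  qed
qed

lemma sign_prod_form:
  fixes p :: "real poly"
  assumes "p = smult c (\<Prod>r\<in>S. [:-r,1:])" "finite S" "x \<notin> S"
  shows "sgn (poly p x) = sgn c * (-1)^card {r\<in>S. x < r}"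
proof -
  have e: "poly p x = c * (\<Prod>r\<in>S. (x - r))" using assms by (simp add: poly_prod)
  have pos: "(\<Prod>r\<in>S. (x - r)) * (-1)^card {r\<in>S. x < r} > 0" using sign_prod_linear[OF assms(2,3)] .
  have "sgn (\<Prod>r\<in>S. (x - r)) = (-1)^card {r\<in>S. x < r}"
  proof -
    show ?thesis
    proof (cases "even (card {r\<in>S. x < r})")
      case True
      then show ?thesis using pos by simp
    next
      case False
      then have "(-1::real)^card {r\<in>S. x < r} = -1" by simp
      then show ?thesis using pos by (simp add: mult_less_0_iff)
    qed
  qed
  then show ?thesis using e by (simp add: sgn_mult)
qed

lemma one_between_I:
  fixes g h :: "real poly"
  assumes "h \<noteq> 0"
    and gh: "\<And>a b. a < b \<Longrightarrow> poly g a = 0 \<Longrightarrow> poly g b = 0 \<Longrightarrow> \<exists>c. a < c \<and> c < b \<and> poly h c = 0"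
    and hg: "\<And>a b. a < b \<Longrightarrow> poly h a = 0 \<Longrightarrow> poly h b = 0 \<Longrightarrow> \<exists>c. a < c \<and> c < b \<and> poly g c = 0"
  shows "one_between g h"
  unfolding one_between_def
proof (intro allI impI)
  fix a b assume ab: "a < b \<and> poly g a = 0 \<and> poly g b = 0 \<and> (\<forall>x. a < x \<and> x < b \<longrightarrow> poly g x \<noteq> 0)"
  define T where "T = {x. a < x \<and> x < b \<and> poly h x = 0}"
  have fin: "finite T" using poly_roots_finite[OF assms(1)] by (rule finite_subset[rotated]) (auto simp: T_def)
  obtain c where "a < c" "c < b" "poly h c = 0" using gh ab by blast
  then have ne: "T \<noteq> {}" by (auto simp: T_def)
  have "\<not> card T \<ge> 2"
  proof
    assume "card T \<ge> 2"
    then have "\<not> card T \<le> Suc 0" by simp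
    then obtain c d where "c \<in> T" "d \<in> T" "c \<noteq> d" using card_le_Suc0_iff_eq[OF fin] by blast
    then obtain c d where cd: "c \<in> T" "d \<in> T" "c < d" by (metis linorder_neqE_linordered_idom)
    then obtain e where "c < e" "e < d" "poly g e = 0" using hg by (auto simp: T_def)
    with cd ab show False by (auto simp: T_def)
  qed
  moreover have "card T \<noteq> 0" using fin ne by simp
  ultimately show "card T = 1" by linarith
qed



lemma sign_change_one_root:
  fixes h :: "real poly"
  assumes "h = smult c (\<Prod>r\<in>H. [:-r,1:])" "finite H" "c \<noteq> 0" "a < b" "a \<notin> H" "b \<notin> H"
    "card {x\<in>H. a < x \<and> x < b} = 1"
  shows "poly h a * poly h b < 0"
proof -
  have sa: "sgn (poly h a) = sgn c * (-1)^card {r\<in>H. a < r}" using sign_prod_form assms by blast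
  have sb: "sgn (poly h b) = sgn c * (-1)^card {r\<in>H. b < r}" using sign_prod_form assms by blast
  have "{r\<in>H. a < r} = {x\<in>H. a < x \<and> x < b} \<union> {r\<in>H. b < r}" using assms(4,6) by (auto, metis linorder_neqE_linordered_idom)
  moreover have "{x\<in>H. a < x \<and> x < b} \<inter> {r\<in>H. b < r} = {}" by auto
  ultimately have "card {r\<in>H. a < r} = 1 + card {r\<in>H. b < r}"
    using assms(2,7) by (simp add: card_Un_disjoint)
  then have "sgn (poly h a) = - sgn (poly h b)" using sa sb by simp
  moreover have "poly h b \<noteq> 0" using sb assms(3) by (auto simp: sgn_0_0)
  then have "sgn (poly h b) * sgn (poly h b) = 1" by (simp add: sgn_if)
  ultimately have "sgn (poly h a * poly h b) = -1" by (simp add: sgn_mult)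
  then show ?thesis by (simp add: sgn_1_neg)
qed

lemma hko_lite:
  fixes g0 h0 c :: "real poly"
  assumes "interlace_strict g0 h0" "c = smult l g0 + smult mu h0" "mu \<noteq> 0" "c \<noteq> 0"
    "degree c \<le> degree g0"
  shows "real_rooted c"
proof -
  have rg: "real_rooted g0" "rsquarefree g0" and rh: "real_rooted h0" "rsquarefree h0"
    and nc: "\<And>x. \<not> (poly g0 x = 0 \<and> poly h0 x = 0)" and ob: "one_between g0 h0"
    using assms(1) unfolding interlace_strict_def by auto
  have g0nz: "g0 \<noteq> 0" and h0nz: "h0 \<noteq> 0" using rg rh by (auto simp: rsquarefree_def)
  define G where "G = {x. poly g0 x = 0}"
  define H where "H = {x. poly h0 x = 0}"
  have finG: "finite G" using g0nz by (simp add: G_def poly_roots_finite)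
  have finH: "finite H" using h0nz by (simp add: H_def poly_roots_finite)
  have cardG: "card G = degree g0" using rr_sqf_card[OF rg] by (simp add: G_def)
  have hform: "h0 = smult (lead_coeff h0) (\<Prod>r\<in>H. [:-r,1:])" using rr_sqf_prod[OF rh] by (simp add: H_def)
  have lch: "lead_coeff h0 \<noteq> 0" using h0nz by simp
  show ?thesis
  proof (cases "G = {}")
    case True
    then have "degree c \<le> 1" using cardG assms(5) by simp
    then show ?thesis using real_rooted_deg1 assms(4) by blast
  next
    case False
    define G' where "G' = G - {Max G}"
    define nxt where "nxt a = Min {b\<in>G. a < b}" for a
    have nxt: "nxt a \<in> G \<and> a < nxt a \<and> (\<forall>x. a < x \<and> x < nxt a \<longrightarrow> x \<notin> G)" if "a \<in> G'" for a
    proof -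
      have "a \<in> G" "a \<noteq> Max G" using that by (auto simp: G'_def)
      then have "a < Max G" using finG by (meson Max_ge order_neq_le_trans)
      then have ne: "{b\<in>G. a < b} \<noteq> {}" using finG False Max_in by blast
      have fin: "finite {b\<in>G. a < b}" using finG by simp
      show ?thesis using Min_in[OF fin ne] Min_le[OF fin] unfolding nxt_def by force
    qed
    have root: "\<exists>x. a < x \<and> x < nxt a \<and> poly c x = 0" if "a \<in> G'" for a
    proof -
      have aG: "a \<in> G" using that by (simp add: G'_def)
      note n = nxt[OF that]
      have pre: "a < nxt a \<and> poly g0 a = 0 \<and> poly g0 (nxt a) = 0 \<and> (\<forall>x. a < x \<and> x < nxt a \<longrightarrow> poly g0 x \<noteq> 0)"
        using aG n by (auto simp: G_def)
      have "card {x. a < x \<and> x < nxt a \<and> poly h0 x = 0} = 1"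
        using ob pre unfolding one_between_def by blast
      moreover have "{x\<in>H. a < x \<and> x < nxt a} = {x. a < x \<and> x < nxt a \<and> poly h0 x = 0}"
        by (auto simp: H_def)
      ultimately have c1: "card {x\<in>H. a < x \<and> x < nxt a} = 1" by simp
      have "a \<notin> H" "nxt a \<notin> H" using nc aG n by (auto simp: G_def H_def)
      then have "poly h0 a * poly h0 (nxt a) < 0"
        using sign_change_one_root[OF hform finH lch _ _ _ c1] n by blast
      moreover have "poly c a = mu * poly h0 a" "poly c (nxt a) = mu * poly h0 (nxt a)"
        using assms(2) aG n by (auto simp: G_def)
      moreover have "mu^2 > 0" using assms(3) by simp
      ultimately have "mu^2 * (poly h0 a * poly h0 (nxt a)) < 0" by (simp add: mult_pos_neg)
      moreover have "poly c a * poly c (nxt a) = mu^2 * (poly h0 a * poly h0 (nxt a))"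
        using \<open>poly c a = mu * poly h0 a\<close> \<open>poly c (nxt a) = mu * poly h0 (nxt a)\<close>
        by (simp add: power2_eq_square algebra_simps)
      ultimately have "poly c a * poly c (nxt a) < 0" by simp
      then show ?thesis using poly_IVT n by blast
    qed
    define psi where "psi a = (SOME x. a < x \<and> x < nxt a \<and> poly c x = 0)" for a
    have psi: "a < psi a \<and> psi a < nxt a \<and> poly c (psi a) = 0" if "a \<in> G'" for a
      unfolding psi_def using someI_ex[OF root[OF that]] .
    have inj: "inj_on psi G'"
    proof (rule inj_onI)
      fix a b assume ab: "a \<in> G'" "b \<in> G'" "psi a = psi b"
      show "a = b"
      proof (rule ccontr)
        assume "a \<noteq> b"
        then consider "a < b" | "b < a" by linarith
        then show False
        proof cases
          case 1
          have "b \<in> G" using ab by (simp add: G'_def)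
          then have "nxt a \<le> b" using nxt[OF ab(1)] 1 by (meson not_le)
          then show False using psi[OF ab(1)] psi[OF ab(2)] ab(3) by linarith
        next
          case 2
          have "a \<in> G" using ab by (simp add: G'_def)
          then have "nxt b \<le> a" using nxt[OF ab(2)] 2 by (meson not_le)
          then show False using psi[OF ab(1)] psi[OF ab(2)] ab(3) by linarith
        qed
      qed
    qed
    have cardG': "card G' + 1 = card G" using False finG card_gt_0_iff[of G] by (simp add: G'_def)
    have "card (psi ` G') + 1 \<ge> degree c"
      using card_image[OF inj] cardG' cardG assms(5) by simp
    moreover have "finite (psi ` G')" using finG by (simp add: G'_def)
    moreover have "\<forall>r\<in>psi ` G'. poly c r = 0" using psi by auto
    ultimately show ?thesis using real_rooted_many_roots assms(4) by blast
  qed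
qed



lemma poly_pos_coeffs:
  fixes p :: "real poly"
  assumes "\<forall>k. coeff p k \<ge> 0" "coeff p 0 > 0" "x \<ge> 0"
  shows "poly p x > 0"
proof -
  have "poly p x = (\<Sum>i\<le>degree p. coeff p i * x ^ i)" by (simp add: poly_altdef)
  also have "\<dots> = coeff p 0 + (\<Sum>i\<in>{1..degree p}. coeff p i * x ^ i)"
    by (simp add: atMost_atLeast0 sum.atLeast_Suc_atMost)
  also have "\<dots> \<ge> coeff p 0" using assms by (intro add_increasing2 sum_nonneg) auto
  finally show ?thesis using assms by simp
qed

lemma neg_zeros_pos_coeffs:
  fixes p :: "real poly"
  assumes "\<forall>k. coeff p k \<ge> 0" "coeff p 0 > 0"
  shows "neg_zeros p"
  unfolding neg_zeros_def using poly_pos_coeffs[OF assms] by (metis less_irrefl not_less)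

lemma minus_infty_sign:
  fixes p :: "real poly"
  assumes "p \<noteq> 0"
  shows "\<exists>M. \<forall>y\<le>M. sgn (poly p y) = sgn (lead_coeff p) * (-1)^degree p"
proof -
  define \<sigma> where "\<sigma> = sgn (lead_coeff p) * (-1::real)^degree p"
  have sig: "\<sigma> = 1 \<or> \<sigma> = -1" using assms
    by (cases "even (degree p)") (auto simp: \<sigma>_def sgn_if)
  define r where "r = smult \<sigma> (pcompose p [:0,-1:])"
  have lr: "lead_coeff (pcompose p [:0,-1:]) = lead_coeff p * (-1)^degree p"
    by (subst lead_coeff_comp) simp_all
  have mm: "((-1::real)^degree p) * (-1)^degree p = 1"
    by (cases "even (degree p)") simp_all
  have "lead_coeff r = sgn (lead_coeff p) * lead_coeff p * (((-1::real)^degree p) * (-1)^degree p)"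
    unfolding r_def lead_coeff_smult lr \<sigma>_def by (simp only: mult_ac)
  also have "\<dots> = \<bar>lead_coeff p\<bar>" unfolding mm by (simp add: abs_sgn mult.commute)
  finally have "lead_coeff r > 0" using assms by simp
  then obtain N where N: "\<forall>x\<ge>N. poly r x \<ge> lead_coeff r" using poly_pinfty_gt_lc by blast
  show ?thesis
  proof (intro exI allI impI)
    fix y assume "y \<le> - N"
    then have "-y \<ge> N" by simp
    then have "poly r (-y) \<ge> lead_coeff r" using N by blast
    then have "poly r (-y) > 0" using \<open>lead_coeff r > 0\<close> by linarith
    then have "\<sigma> * poly p y > 0" by (simp add: r_def poly_pcompose)
    then show "sgn (poly p y) = sgn (lead_coeff p) * (-1)^degree p"
      using sig unfolding \<sigma>_def[symmetric] by (auto simp: sgn_if)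
  qed
qed

lemma no_root_same_sign:
  fixes p :: "real poly"
  assumes "u \<le> v" "\<forall>x. u \<le> x \<and> x \<le> v \<longrightarrow> poly p x \<noteq> 0"
  shows "poly p u * poly p v > 0"
proof (cases "u = v")
  case True
  then have "poly p v \<noteq> 0" using assms by auto
  then show ?thesis using True by (cases "poly p v > 0") (auto simp: mult_neg_neg)
next
  case False
  with assms have "u < v" by simp
  have "\<not> poly p u * poly p v < 0"
  proof
    assume "poly p u * poly p v < 0"
    then obtain x where "u < x" "x < v" "poly p x = 0" using poly_IVT \<open>u < v\<close> by blast
    with assms show False by auto
  qed
  moreover have "poly p u * poly p v \<noteq> 0" using assms by auto
  ultimately show ?thesis by linarith
qed

lemma exists_no_root_near_right:
  fixes q :: "real poly"
  assumes "q \<noteq> 0" "poly q a \<noteq> 0" "a < x"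
  shows "\<exists>y. a < y \<and> y \<le> x \<and> (\<forall>z. a \<le> z \<and> z \<le> y \<longrightarrow> poly q z \<noteq> 0)"
proof -
  define Y where "Y = {y. a < y \<and> y \<le> x \<and> poly q y = 0}"
  have fin: "finite Y" using poly_roots_finite[OF assms(1)] by (rule finite_subset[rotated]) (auto simp: Y_def)
  show ?thesis
  proof (cases "Y = {}")
    case True
    have "\<forall>z. a \<le> z \<and> z \<le> x \<longrightarrow> poly q z \<noteq> 0"
    proof (intro allI impI)
      fix z assume z: "a \<le> z \<and> z \<le> x"
      show "poly q z \<noteq> 0"
      proof (cases "z = a")
        case True then show ?thesis using assms by simp
      next
        case False then have "z \<notin> Y" using True by auto
        then show ?thesis using z False by (auto simp: Y_def)
      qed
    qed
    then show ?thesis using assms by (intro exI[of _ x]) auto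
  next
    case False
    define y where "y = (a + Min Y) / 2"
    have "Min Y \<in> Y" using Min_in[OF fin False] .
    then have m: "a < Min Y" "Min Y \<le> x" by (auto simp: Y_def)
    have "\<forall>z. a \<le> z \<and> z \<le> y \<longrightarrow> poly q z \<noteq> 0"
    proof (intro allI impI)
      fix z assume z: "a \<le> z \<and> z \<le> y"
      show "poly q z \<noteq> 0"
      proof
        assume qz: "poly q z = 0"
        then have "z \<noteq> a" using assms by auto
        then have "z \<in> Y" using z qz m by (auto simp: Y_def y_def)
        then have "Min Y \<le> z" using fin by simp
        then show False using z m by (simp add: y_def)
      qed
    qed
    then show ?thesis using m by (intro exI[of _ y]) (auto simp: y_def)
  qed
qed

lemma exists_no_root_near_left:
  fixes q :: "real poly"
  assumes "q \<noteq> 0" "poly q b \<noteq> 0" "x < b"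
  shows "\<exists>y. x \<le> y \<and> y < b \<and> (\<forall>z. y \<le> z \<and> z \<le> b \<longrightarrow> poly q z \<noteq> 0)"
proof -
  define Y where "Y = {y. x \<le> y \<and> y < b \<and> poly q y = 0}"
  have fin: "finite Y" using poly_roots_finite[OF assms(1)] by (rule finite_subset[rotated]) (auto simp: Y_def)
  show ?thesis
  proof (cases "Y = {}")
    case True
    have "\<forall>z. x \<le> z \<and> z \<le> b \<longrightarrow> poly q z \<noteq> 0"
    proof (intro allI impI)
      fix z assume z: "x \<le> z \<and> z \<le> b"
      show "poly q z \<noteq> 0"
      proof (cases "z = b")
        case True then show ?thesis using assms by simp
      next
        case False then have "z \<notin> Y" using True by auto
        then show ?thesis using z False by (auto simp: Y_def)
      qed
    qed
    then show ?thesis using assms by (intro exI[of _ x]) auto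
  next
    case False
    define y where "y = (b + Max Y) / 2"
    have "Max Y \<in> Y" using Max_in[OF fin False] .
    then have m: "Max Y < b" "x \<le> Max Y" by (auto simp: Y_def)
    have "\<forall>z. y \<le> z \<and> z \<le> b \<longrightarrow> poly q z \<noteq> 0"
    proof (intro allI impI)
      fix z assume z: "y \<le> z \<and> z \<le> b"
      show "poly q z \<noteq> 0"
      proof
        assume qz: "poly q z = 0"
        then have "z \<noteq> b" using assms by auto
        then have "z \<in> Y" using z qz m by (auto simp: Y_def y_def)
        then have "z \<le> Max Y" using fin by simp
        then show False using z m by (simp add: y_def)
      qed
    qed
    then show ?thesis using m by (intro exI[of _ y]) (auto simp: y_def)
  qed
qed

lemma sign_right_of_root:
  fixes f D f0 q :: "real poly"
  assumes fD: "f = D * f0" and dD: "pderiv f = D * q"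
    and fa: "poly f a = 0" and qa: "poly q a \<noteq> 0" and ax: "a < x" and xb: "x < b"
    and nr: "\<forall>y. a < y \<and> y < b \<longrightarrow> poly f y \<noteq> 0"
  shows "poly q a * poly f0 x > 0"
proof -
  have qnz: "q \<noteq> 0" using qa by auto
  obtain y where y: "a < y" "y \<le> x" "\<forall>z. a \<le> z \<and> z \<le> y \<longrightarrow> poly q z \<noteq> 0"
    using exists_no_root_near_right[OF qnz qa ax] by blast
  obtain c where c: "a < c" "c < y" "poly f y - poly f a = (y - a) * poly (pderiv f) c"
    using poly_MVT[OF y(1)] by blast
  have fy: "poly f y = (y - a) * (poly D c * poly q c)" using c fa dD by simp
  have "poly f c * poly f y > 0"
    using no_root_same_sign[of c y f] nr c y xb by auto
  then have "(poly D c * poly f0 c) * ((y - a) * (poly D c * poly q c)) > 0" using fy fD by simp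
  then have "(y - a) * ((poly D c)^2 * (poly f0 c * poly q c)) > 0"
    by (simp add: power2_eq_square algebra_simps)
  moreover have "y - a > 0" using y(1) by simp
  ultimately have "(poly D c)^2 * (poly f0 c * poly q c) > 0" by (rule zero_less_mult_pos)
  moreover have "poly D c \<noteq> 0" using nr c y xb fD by auto
  then have "(poly D c)^2 > 0" by simp
  ultimately have pos1: "poly f0 c * poly q c > 0" by (rule zero_less_mult_pos)
  have "poly q a * poly q c > 0" using no_root_same_sign[of a c q] y c by auto
  moreover have "poly f0 c * poly f0 x > 0"
  proof (rule no_root_same_sign)
    show "c \<le> x" using c y by simp
    show "\<forall>z. c \<le> z \<and> z \<le> x \<longrightarrow> poly f0 z \<noteq> 0"
      using nr c y xb fD by auto
  qed
  ultimately have "(poly q a * poly q c) * (poly f0 c * poly f0 x) * (poly f0 c * poly q c) > 0"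
    using pos1 by simp
  then have "(poly q a * poly f0 x) * ((poly f0 c * poly q c)^2) > 0"
    by (simp add: power2_eq_square algebra_simps)
  moreover have "poly f0 c * poly q c \<noteq> 0" using pos1 by linarith
  then have "(poly f0 c * poly q c)^2 > 0" by simp
  ultimately show ?thesis by (rule zero_less_mult_pos2)
qed

lemma sign_left_of_root:
  fixes f D f0 q :: "real poly"
  assumes fD: "f = D * f0" and dD: "pderiv f = D * q"
    and fb: "poly f b = 0" and qb: "poly q b \<noteq> 0" and ax: "a < x" and xb: "x < b"
    and nr: "\<forall>y. a < y \<and> y < b \<longrightarrow> poly f y \<noteq> 0"
  shows "poly q b * poly f0 x < 0"
proof -
  have qnz: "q \<noteq> 0" using qb by auto
  obtain y where y: "x \<le> y" "y < b" "\<forall>z. y \<le> z \<and> z \<le> b \<longrightarrow> poly q z \<noteq> 0"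
    using exists_no_root_near_left[OF qnz qb xb] by blast
  obtain c where c: "y < c" "c < b" "poly f b - poly f y = (b - y) * poly (pderiv f) c"
    using poly_MVT[OF y(2)] by blast
  have fy: "poly f y = - ((b - y) * (poly D c * poly q c))" using c fb dD by simp
  have "poly f y * poly f c > 0"
    using no_root_same_sign[of y c f] nr c y ax by auto
  then have "(- ((b - y) * (poly D c * poly q c))) * (poly D c * poly f0 c) > 0" using fy fD by simp
  then have "(b - y) * ((poly D c)^2 * (poly f0 c * poly q c)) < 0"
    by (simp add: power2_eq_square algebra_simps)
  moreover have "b - y > 0" using y(2) by simp
  ultimately have "(poly D c)^2 * (poly f0 c * poly q c) < 0" by (simp add: mult_less_0_iff)
  moreover have "poly D c \<noteq> 0" using nr c y ax fD by auto
  then have "(poly D c)^2 > 0" by simp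
  ultimately have neg1: "poly f0 c * poly q c < 0" by (simp add: mult_less_0_iff)
  have "poly q c * poly q b > 0" using no_root_same_sign[of c b q] y c by auto
  moreover have "poly f0 x * poly f0 c > 0"
  proof (rule no_root_same_sign)
    show "x \<le> c" using c y by simp
    show "\<forall>z. x \<le> z \<and> z \<le> c \<longrightarrow> poly f0 z \<noteq> 0"
      using nr c y ax fD by auto
  qed
  ultimately have "(poly q c * poly q b) * (poly f0 x * poly f0 c) * (poly f0 c * poly q c) < 0"
    using neg1 by (simp add: mult_pos_neg)
  then have "(poly q b * poly f0 x) * ((poly f0 c * poly q c)^2) < 0"
    by (simp add: power2_eq_square algebra_simps)
  moreover have "poly f0 c * poly q c \<noteq> 0" using neg1 by linarith
  then have "(poly f0 c * poly q c)^2 > 0" by simp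
  ultimately show ?thesis by (simp add: mult_less_0_iff)
qed

lemma coprime_X:
  fixes p :: "real poly"
  assumes "poly p 0 \<noteq> 0"
  shows "coprime p [:0,1:]"
proof (rule coprimeI)
  fix d assume dp: "d dvd p" and dX: "d dvd [:0,1:]"
  from dX obtain e where e: "[:0,1:] = d * e" by (elim dvdE)
  have dnz: "d \<noteq> 0" "e \<noteq> 0" using e by auto
  have "degree (d * e) = degree d + degree e" by (rule degree_mult_eq[OF dnz])
  moreover have "degree ([:0,1:]::real poly) = 1" by simp
  ultimately have "degree d + degree e = 1" unfolding e by simp
  show "is_unit d"
  proof (cases "degree d = 0")
    case True then show ?thesis using dnz by (simp add: is_unit_iff_degree)
  next
    case False
    then have "degree e = 0" using \<open>degree d + degree e = 1\<close> by simp
    then obtain c where c: "e = [:c:]" by (metis degree_eq_zeroE)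
    have "poly d 0 * c = 0" using arg_cong[OF e, of "\<lambda>r. poly r 0"] c by (simp add: mult.commute)
    then have "poly d 0 = 0" using c dnz by auto
    moreover from dp obtain k where "p = d * k" by (elim dvdE)
    ultimately have "poly p 0 = 0" by simp
    with assms show ?thesis by simp
  qed
qed

lemma zr1_char:
  fixes p :: "real poly"
  assumes "p \<noteq> 0" "degree p \<ge> 1" "poly p r0 = 0" "neg_zeros p"
  shows "\<exists>r. zr p 1 = ereal r \<and> poly p r = 0 \<and> (\<forall>y. poly p y = 0 \<longrightarrow> y \<le> r)"
proof -
  define xs where "xs = sort_key abs (sorted_list_of_multiset (proots p))"
  have setxs: "set xs = {x. poly p x = 0}" using assms(1) by (simp add: xs_def)
  have "xs \<noteq> []" using setxs assms(3) by auto
  then have l: "0 < length xs" by simp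
  have srt: "sorted (map abs xs)" by (simp add: xs_def)
  have zr: "zr p 1 = ereal (xs ! 0)" using assms(2) by (simp add: zr_def xs_def)
  have r: "poly p (xs ! 0) = 0" using nth_mem[OF l] setxs by auto
  have "y \<le> xs ! 0" if "poly p y = 0" for y
  proof -
    have "y \<in> set xs" using that setxs by auto
    then obtain j where j: "j < length xs" "xs ! j = y" by (auto simp: in_set_conv_nth)
    have "map abs xs ! 0 \<le> map abs xs ! j" using sorted_nth_mono[OF srt, of 0 j] j by simp
    then have "\<bar>xs ! 0\<bar> \<le> \<bar>y\<bar>" using j l by simp
    moreover have "xs ! 0 < 0" "y < 0" using r that assms(4) by (auto simp: neg_zeros_def)
    ultimately show ?thesis by simp
  qed
  then show ?thesis using zr r by blast
qed



lemma real_rooted_smult: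
  assumes "real_rooted p" "c \<noteq> 0"
  shows "real_rooted (smult c p)"
proof -
  have "real_rooted [:c:]" using assms(2) by (intro real_rooted_deg1) auto
  moreover have "smult c p = [:c:] * p" by simp
  ultimately show ?thesis using real_rooted_mult[OF _ assms(1)] by metis
qed

lemma coeff_Xpderiv: "coeff (pCons 0 (pderiv p)) k = real k * coeff p k"
  by (cases k) (simp_all add: coeff_pderiv)

locale setting =
  fixes f :: "real poly" and m :: nat and s t \<kappa> :: real
  assumes m1: "m \<ge> 1"
    and cpos: "\<And>k. k \<le> m \<Longrightarrow> coeff f k > 0" and czero: "\<And>k. m < k \<Longrightarrow> coeff f k = 0"
    and spos: "s > 0" and tpos: "t > 0" and kpos: "\<kappa> > 0"
    and tk: "\<And>k. k < m \<Longrightarrow> t * real k < 1" and tm: "t * real m \<le> 1"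
begin

definition "Xf = pCons 0 (pderiv f)"
definition "g = f + smult s Xf"
definition "h = smult \<kappa> (f - smult t Xf)"

lemma coeff_Xf: "coeff Xf k = real k * coeff f k"
  unfolding Xf_def by (rule coeff_Xpderiv)

lemma coeff_g: "coeff g k = coeff f k * (1 + s * real k)"
  by (simp add: g_def coeff_Xf algebra_simps)

lemma coeff_h: "coeff h k = \<kappa> * (coeff f k * (1 - t * real k))"
  by (simp add: h_def coeff_Xf algebra_simps)

lemma poly_Xf: "poly Xf x = x * poly (pderiv f) x"
  by (simp add: Xf_def)

lemma deg_f: "degree f = m"
proof (rule antisym)
  show "degree f \<le> m" by (rule degree_le) (use czero in auto)
  show "m \<le> degree f" by (rule le_degree) (use cpos[of m] in auto)
qed

lemma f_nz: "f \<noteq> 0" using deg_f cpos[of 0] by auto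

lemma pderiv_f_nz: "pderiv f \<noteq> 0"
  using deg_f m1 by (metis pderiv_iszero degree_pCons_0 not_one_le_zero)

lemma coeff_g_pos: "k \<le> m \<Longrightarrow> coeff g k > 0"
  using cpos[of k] spos by (simp add: coeff_g add_pos_nonneg)

lemma coeff_h_nonneg: "coeff h k \<ge> 0"
proof (cases "k \<le> m")
  case True
  then have "t * real k \<le> t * real m" using tpos by (simp add: mult_left_mono)
  then have "1 - t * real k \<ge> 0" using tm by simp
  then show ?thesis using cpos[OF True] kpos by (simp add: coeff_h)
next
  case False then show ?thesis using czero[of k] by (simp add: coeff_h)
qed

lemma coeff_h_pos: "k < m \<Longrightarrow> coeff h k > 0"
  using cpos[of k] tk[of k] kpos by (simp add: coeff_h)

lemma deg_g: "degree g = m"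
proof (rule antisym)
  show "degree g \<le> m" by (rule degree_le) (use czero in \<open>auto simp: coeff_g\<close>)
  show "m \<le> degree g" by (rule le_degree) (use coeff_g_pos[of m] in auto)
qed

lemma lc_g: "lead_coeff g > 0" using deg_g coeff_g_pos by simp

lemma deg_h: "degree h = (if t * real m < 1 then m else m - 1)"
proof (cases "t * real m < 1")
  case True
  have "degree h = m"
  proof (rule antisym)
    show "degree h \<le> m" by (rule degree_le) (use czero in \<open>auto simp: coeff_h\<close>)
    show "m \<le> degree h" by (rule le_degree) (use cpos[of m] True kpos in \<open>auto simp: coeff_h\<close>)
  qed
  then show ?thesis using True by simp
next
  case False
  then have tm1: "t * real m = 1" using tm by simp
  have "degree h = m - 1"
  proof (rule antisym)
    show "degree h \<le> m - 1"
    proof (rule degree_le, intro allI impI)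
      fix k assume "m - 1 < k"
      then have "k = m \<or> m < k" by linarith
      then show "coeff h k = 0" using czero tm1 by (auto simp: coeff_h)
    qed
    show "m - 1 \<le> degree h" by (rule le_degree) (use coeff_h_pos[of "m - 1"] m1 in auto)
  qed
  then show ?thesis using False by simp
qed

lemma lc_h: "lead_coeff h > 0"
  using deg_h coeff_h_pos[of "m - 1"] m1 cpos[of m] kpos by (auto simp: coeff_h)

lemma g_nz: "g \<noteq> 0" using lc_g by auto
lemma h_nz: "h \<noteq> 0" using lc_h by auto

lemma deg_h_le: "degree h \<le> degree g" using deg_h deg_g by simp

lemma neg_zeros_g: "neg_zeros g"
proof (rule neg_zeros_pos_coeffs)
  show "\<forall>k. coeff g k \<ge> 0"
    using coeff_g_pos czero by (metis coeff_g less_le mult_zero_left not_le)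
  show "coeff g 0 > 0" using coeff_g_pos by simp
qed

lemma neg_zeros_h: "neg_zeros h"
  using neg_zeros_pos_coeffs coeff_h_nonneg coeff_h_pos[of 0] m1 by simp

lemma neg_zeros_f: "neg_zeros f"
proof (rule neg_zeros_pos_coeffs)
  show "\<forall>k. coeff f k \<ge> 0" using cpos czero by (metis less_le not_le)
  show "coeff f 0 > 0" using cpos by simp
qed

lemma f_comb: "smult (s + t) f = smult t g + smult (s / \<kappa>) h"
  using kpos by (intro poly_eqI) (simp add: g_def h_def field_simps)

lemma g_minus_h: "smult (s + t) Xf = g - smult (1 / \<kappa>) h"
  using kpos by (intro poly_eqI) (simp add: g_def h_def field_simps)

lemma A_strict:
  assumes "interlace_strict g h"
  shows "real_rooted f \<and> rsquarefree f"
proof -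
  define c where "c = smult t g + smult (s / \<kappa>) h"
  have c: "c = smult (s + t) f" using f_comb by (simp add: c_def)
  have cnz: "c \<noteq> 0" using c f_nz spos tpos by simp
  have "degree c \<le> degree g" using c deg_f deg_g spos tpos by simp
  then have "real_rooted c" using hko_lite[OF assms c_def _ cnz] spos kpos by simp
  then have rr: "real_rooted f"
    using real_rooted_smult[of c "1 / (s + t)"] c spos tpos by simp
  have "rsquarefree f"
    unfolding rsquarefree_roots
  proof (intro allI notI)
    fix a assume a: "poly f a = 0 \<and> poly (pderiv f) a = 0"
    then have "poly g a = 0" "poly h a = 0" by (simp_all add: g_def h_def poly_Xf)
    with assms show False unfolding interlace_strict_def by blast
  qed
  with rr show ?thesis by simp
qed

lemma A_nonstrict:
  assumes "interlace_nonstrict g h"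
  shows "real_rooted f"
proof -
  define D where "D = gcd g h"
  define g0 where "g0 = g div D"
  define h0 where "h0 = h div D"
  have Dnz: "D \<noteq> 0" using g_nz by (simp add: D_def)
  have gD: "g = D * g0" by (simp add: D_def g0_def)
  have hD: "h = D * h0" by (simp add: D_def h0_def)
  have ist: "interlace_strict g0 h0" using assms by (simp add: interlace_nonstrict_def D_def g0_def h0_def)
  have rg: "real_rooted g" using assms by (simp add: interlace_nonstrict_def)
  have h0nz: "h0 \<noteq> 0" using hD h_nz by auto
  have g0nz: "g0 \<noteq> 0" using gD g_nz by auto
  define c where "c = smult t g0 + smult (s / \<kappa>) h0"
  have Dc: "D * c = smult (s + t) f" using f_comb gD hD by (simp add: c_def algebra_simps)
  have cnz: "c \<noteq> 0" using Dc f_nz spos tpos by auto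
  have "degree h0 \<le> degree g0"
    using deg_h_le gD hD Dnz g0nz h0nz by (simp add: degree_mult_eq)
  then have "degree c \<le> degree g0"
    unfolding c_def by (meson degree_add_le degree_smult_le order_trans)
  then have rc: "real_rooted c" using hko_lite[OF ist c_def _ cnz] spos kpos by simp
  have rD: "real_rooted D" using real_rooted_dvd[OF rg _ g_nz] gD by simp
  have "real_rooted (D * c)" using real_rooted_mult[OF rD rc] .
  then have "real_rooted (smult (1 / (s + t)) (D * c))" using spos tpos by (intro real_rooted_smult) auto
  then show ?thesis using Dc spos tpos by simp
qed

end



context setting begin

definition "D = gcd f (pderiv f)"
definition "f0 = f div D"
definition "q = pderiv f div D"
definition "g0 = f0 + smult s (pCons 0 q)"
definition "h0 = smult \<kappa> (f0 - smult t (pCons 0 q))"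

lemma D_nz: "D \<noteq> 0" using f_nz by (simp add: D_def)
lemma fD: "f = D * f0" by (simp add: D_def f0_def)
lemma dD: "pderiv f = D * q" by (simp add: D_def q_def)
lemma pCons0_mult: "pCons 0 (a * b) = a * pCons 0 (b::real poly)" by simp
lemma gD: "g = D * g0"
  unfolding g_def g0_def Xf_def dD pCons0_mult by (subst fD) (simp add: algebra_simps)
lemma hD: "h = D * h0"
  unfolding h_def h0_def Xf_def dD pCons0_mult by (subst fD) (simp add: algebra_simps)

lemma f0_nz: "f0 \<noteq> 0"
proof
  assume "f0 = 0"
  then have "D * f0 = 0" by simp
  then have "f = 0" by (simp only: fD[symmetric])
  then show False using f_nz by simp
qed
lemma g0_nz: "g0 \<noteq> 0" using gD g_nz by auto
lemma h0_nz: "h0 \<noteq> 0" using hD h_nz by auto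

lemma f0_sqf: "rsquarefree f0 \<and> (\<forall>a. poly f0 a = 0 \<longleftrightarrow> poly f a = 0)"
proof (rule poly_squarefree_decomp[OF pderiv_f_nz])
  show "f = f0 * D" using fD by (simp add: mult.commute)
  show "pderiv f = q * D" using dD by (simp add: mult.commute)
  show "D = fst (bezout_coefficients f (pderiv f)) * f + snd (bezout_coefficients f (pderiv f)) * pderiv f"
    unfolding D_def by (rule bezout_coefficients_fst_snd[symmetric])
qed

lemma f0_roots: "poly f0 a = 0 \<longleftrightarrow> poly f a = 0" using f0_sqf by blast

lemma gcd_f0_q: "gcd f0 q = 1"
proof -
  have "D = gcd f (pderiv f)" by (simp add: D_def)
  also have "\<dots> = gcd (D * f0) (D * q)" by (simp only: fD[symmetric] dD[symmetric])
  also have "\<dots> = normalize D * normalize (gcd f0 q)" by (simp add: gcd_mult_left normalize_mult)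
  also have "\<dots> = D * gcd f0 q" by (simp add: D_def)
  finally have "D * 1 = D * gcd f0 q" by simp
  then show ?thesis using D_nz by (metis mult_cancel_left)
qed

lemma coprime_f0_q: "coprime f0 q" using gcd_f0_q by (simp add: coprime_iff_gcd_eq_1)

lemma f0_at0: "poly f0 0 \<noteq> 0"
  using f0_roots neg_zeros_f unfolding neg_zeros_def by (metis less_irrefl)

lemma coprime_f0_Xq: "coprime f0 (pCons 0 q)"
proof -
  have "pCons 0 q = [:0,1:] * q" by simp
  moreover have "coprime f0 [:0,1:]" using coprime_X f0_at0 by blast
  moreover have "coprime f0 ([:0,1:] * q)"
    using coprime_X f0_at0 coprime_f0_q by (subst coprime_mult_right_iff) blast
  ultimately show ?thesis by simp
qed

lemma f0_comb: "smult (s + t) f0 = smult t g0 + smult (s / \<kappa>) h0"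
  using kpos by (intro poly_eqI) (simp add: g0_def h0_def field_simps coeff_pCons split: nat.split)

lemma Xq_comb: "smult (s + t) (pCons 0 q) = g0 - smult (1 / \<kappa>) h0"
  using kpos by (intro poly_eqI) (simp add: g0_def h0_def field_simps coeff_pCons split: nat.split)

lemma coprime_g0_h0: "coprime g0 h0"
proof (rule coprimeI)
  fix d assume dg: "d dvd g0" and dh: "d dvd h0"
  have "d dvd smult t g0 + smult (s / \<kappa>) h0" using dg dh by (simp add: dvd_add dvd_smult)
  then have "d dvd smult (s + t) f0" using f0_comb by simp
  then have d1: "d dvd f0" using spos tpos by (simp add: dvd_smult_cancel)
  have "d dvd g0 - smult (1 / \<kappa>) h0" using dg dh by (simp add: dvd_diff dvd_smult)
  then have "d dvd smult (s + t) (pCons 0 q)" using Xq_comb by simp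
  then have d2: "d dvd pCons 0 q" using spos tpos by (simp add: dvd_smult_cancel)
  show "is_unit d" using coprime_common_divisor[OF coprime_f0_Xq d1 d2] .
qed

lemma gcd_gh: "gcd g h = D"
proof -
  have "gcd g h = normalize D * normalize (gcd g0 h0)" unfolding gD hD by (simp add: gcd_mult_left normalize_mult)
  also have "gcd g0 h0 = 1" using coprime_g0_h0 by (simp add: coprime_iff_gcd_eq_1)
  finally show ?thesis by (simp add: D_def)
qed

lemma g_div: "g div gcd g h = g0" unfolding gcd_gh using gD D_nz by simp
lemma h_div: "h div gcd g h = h0" unfolding gcd_gh using hD D_nz by simp

lemma deg_split: "degree f = degree D + degree f0" "degree g = degree D + degree g0"
    "degree h = degree D + degree h0"
proof -
  have "degree (D * f0) = degree D + degree f0" by (rule degree_mult_eq[OF D_nz f0_nz])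
  then show "degree f = degree D + degree f0" unfolding fD[symmetric] .
  have "degree (D * g0) = degree D + degree g0" by (rule degree_mult_eq[OF D_nz g0_nz])
  then show "degree g = degree D + degree g0" unfolding gD[symmetric] .
  have "degree (D * h0) = degree D + degree h0" by (rule degree_mult_eq[OF D_nz h0_nz])
  then show "degree h = degree D + degree h0" unfolding hD[symmetric] .
qed

lemma D_one_if_sqf:
  assumes "real_rooted f" "rsquarefree f"
  shows "D = 1"
proof -
  have "D dvd f" by (simp add: D_def)
  then have rD: "real_rooted D" using real_rooted_dvd[OF assms(1) _ f_nz] by blast
  have "degree D = 0"
  proof (rule ccontr)
    assume "degree D \<noteq> 0"
    then obtain x where x: "poly D x = 0" using real_rooted_has_root[OF rD] by auto
    then have "poly (D * f0) x = 0" "poly (D * q) x = 0" by simp_all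
    then have "poly f x = 0" "poly (pderiv f) x = 0" unfolding fD[symmetric] dD[symmetric] .
    with assms(2) show False unfolding rsquarefree_roots by blast
  qed
  then have "is_unit D" using D_nz by (simp add: is_unit_iff_degree)
  then have "normalize D = 1" by (simp add: is_unit_normalize)
  then show ?thesis by (simp add: D_def)
qed

end


locale rsetting = setting +
  assumes rr: "real_rooted f"
begin

definition "R = {x. poly f x = 0}"
definition "nxt x = (if \<exists>y\<in>R. x < y then Min {y\<in>R. x < y} else 0)"

lemma finR: "finite R" using f_nz by (simp add: R_def poly_roots_finite)
lemma R_neg: "\<rho> \<in> R \<Longrightarrow> \<rho> < 0" using neg_zeros_f by (simp add: R_def neg_zeros_def)
lemma R_f0: "R = {x. poly f0 x = 0}" using f0_roots by (simp add: R_def)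

lemma rr_f0: "real_rooted f0"
proof -
  have "f0 dvd f" by (metis fD dvd_triv_right)
  then show ?thesis using real_rooted_dvd[OF rr _ f_nz] by blast
qed

lemma card_R: "card R = degree f0"
  using rr_sqf_card[OF rr_f0] f0_sqf R_f0 by simp

lemma f0_form: "f0 = smult (lead_coeff f0) (\<Prod>r\<in>R. [:-r,1:])"
  using rr_sqf_prod[OF rr_f0] f0_sqf R_f0 by simp

lemma deg_D_lt: "degree D < degree f"
proof -
  have "D dvd pderiv f" by (simp add: D_def)
  then have "degree D \<le> degree (pderiv f)" using dvd_imp_degree D_nz pderiv_f_nz by blast
  also have "\<dots> < degree f" using deg_f m1 by (simp add: degree_pderiv)
  finally show ?thesis .
qed

lemma deg_f0_pos: "degree f0 \<ge> 1" using deg_D_lt deg_split(1) by simp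

lemma R_ne: "R \<noteq> {}" using card_R deg_f0_pos by auto

lemma nxt_props:
  assumes "\<rho> \<in> R"
  shows "\<rho> < nxt \<rho>" "nxt \<rho> \<le> 0" "\<And>y. \<rho> < y \<Longrightarrow> y < nxt \<rho> \<Longrightarrow> poly f y \<noteq> 0"
    "\<rho> \<noteq> Max R \<Longrightarrow> nxt \<rho> \<in> R" "\<rho> = Max R \<Longrightarrow> nxt \<rho> = 0"
proof -
  have fin: "finite {y\<in>R. \<rho> < y}" using finR by simp
  have neg: "\<rho> < 0" using R_neg assms .
  have maxiff: "(\<exists>y\<in>R. \<rho> < y) \<longleftrightarrow> \<rho> \<noteq> Max R"
  proof
    assume "\<exists>y\<in>R. \<rho> < y"
    then obtain y where "y \<in> R" "\<rho> < y" by blast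
    then show "\<rho> \<noteq> Max R" using finR Max_ge[OF finR] by fastforce
  next
    assume "\<rho> \<noteq> Max R"
    moreover have "\<rho> \<le> Max R" using Max_ge[OF finR assms] .
    ultimately show "\<exists>y\<in>R. \<rho> < y" using Max_in[OF finR] assms by force
  qed
  show "\<rho> < nxt \<rho>"
  proof (cases "\<exists>y\<in>R. \<rho> < y")
    case True
    then have "{y\<in>R. \<rho> < y} \<noteq> {}" by blast
    from Min_in[OF fin this] show ?thesis using True by (simp add: nxt_def)
  qed (use neg in \<open>simp add: nxt_def\<close>)
  show "nxt \<rho> \<le> 0"
  proof (cases "\<exists>y\<in>R. \<rho> < y")
    case True
    then have "{y\<in>R. \<rho> < y} \<noteq> {}" by blast
    from Min_in[OF fin this] show ?thesis using True R_neg by (auto simp: nxt_def intro: less_imp_le)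
  qed (simp add: nxt_def)
  show "poly f y \<noteq> 0" if "\<rho> < y" "y < nxt \<rho>" for y
  proof
    assume fy: "poly f y = 0"
    then have yR: "y \<in> R" by (simp add: R_def)
    then have ex: "\<exists>y\<in>R. \<rho> < y" using that by blast
    have "Min {y\<in>R. \<rho> < y} \<le> y" using Min_le[OF fin] yR that by simp
    then show False using that ex by (simp add: nxt_def)
  qed
  show "nxt \<rho> \<in> R" if "\<rho> \<noteq> Max R"
  proof -
    have ex: "\<exists>y\<in>R. \<rho> < y" using maxiff that by blast
    then have "{y\<in>R. \<rho> < y} \<noteq> {}" by blast
    from Min_in[OF fin this] show ?thesis using ex by (simp add: nxt_def)
  qed
  show "nxt \<rho> = 0" if "\<rho> = Max R"
    using maxiff that by (simp add: nxt_def)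
qed

lemma nxt_le:
  assumes "\<rho>1 \<in> R" "\<rho>2 \<in> R" "\<rho>1 < \<rho>2"
  shows "nxt \<rho>1 \<le> \<rho>2"
proof -
  have ex: "\<exists>y\<in>R. \<rho>1 < y" using assms by blast
  have "Min {y\<in>R. \<rho>1 < y} \<le> \<rho>2" using finR assms by simp
  then show ?thesis using ex by (simp add: nxt_def)
qed

lemma q_R: "\<rho> \<in> R \<Longrightarrow> poly q \<rho> \<noteq> 0"
  using coprime_poly_0[OF coprime_f0_q, of \<rho>] R_f0 by auto

lemma poly_g0: "poly g0 x = poly f0 x + s * x * poly q x" by (simp add: g0_def)
lemma poly_h0: "poly h0 x = \<kappa> * (poly f0 x - t * x * poly q x)" by (simp add: h0_def algebra_simps)

lemma signR:
  assumes "\<rho> \<in> R" "\<rho> < x" "x < nxt \<rho>"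
  shows "poly q \<rho> * poly f0 x > 0"
proof (rule sign_right_of_root[OF fD dD _ q_R[OF assms(1)] assms(2,3)])
  show "poly f \<rho> = 0" using assms(1) by (simp add: R_def)
  show "\<forall>y. \<rho> < y \<and> y < nxt \<rho> \<longrightarrow> poly f y \<noteq> 0" using nxt_props(3)[OF assms(1)] by blast
qed

lemma signL:
  assumes "\<rho> \<in> R" "\<rho> \<noteq> Max R" "\<rho> < x" "x < nxt \<rho>"
  shows "poly q (nxt \<rho>) * poly f0 x < 0"
proof -
  have nR: "nxt \<rho> \<in> R" using nxt_props(4)[OF assms(1,2)] .
  show ?thesis
  proof (rule sign_left_of_root[OF fD dD _ q_R[OF nR] assms(3,4)])
    show "poly f (nxt \<rho>) = 0" using nR by (simp add: R_def)
    show "\<forall>y. \<rho> < y \<and> y < nxt \<rho> \<longrightarrow> poly f y \<noteq> 0" using nxt_props(3)[OF assms(1)] by blast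
  qed
qed

lemma f0_nonzero_gap: "\<rho> \<in> R \<Longrightarrow> \<rho> < y \<Longrightarrow> y < nxt \<rho> \<Longrightarrow> poly f0 y \<noteq> 0"
  using nxt_props(3) f0_roots by blast

lemma gap_roots:
  assumes "\<rho> \<in> R" "\<rho> \<noteq> Max R"
  shows "\<exists>a b. \<rho> < a \<and> a < b \<and> b < nxt \<rho> \<and> poly g0 a = 0 \<and> poly h0 b = 0"
proof -
  define \<rho>' where "\<rho>' = nxt \<rho>"
  have r'R: "\<rho>' \<in> R" using nxt_props(4)[OF assms] by (simp add: \<rho>'_def)
  have lt: "\<rho> < \<rho>'" using nxt_props(1)[OF assms(1)] by (simp add: \<rho>'_def)
  define x where "x = (\<rho> + \<rho>') / 2"
  have x: "\<rho> < x" "x < \<rho>'" using lt by (simp_all add: x_def)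
  have A: "poly q \<rho> * poly f0 x > 0" using signR[OF assms(1)] x by (simp add: \<rho>'_def)
  have B: "poly q \<rho>' * poly f0 x < 0" using signL[OF assms] x by (simp add: \<rho>'_def)
  have "(poly q \<rho> * poly f0 x) * (poly q \<rho>' * poly f0 x) < 0" using A B by (simp add: mult_pos_neg)
  then have "(poly q \<rho> * poly q \<rho>') * (poly f0 x)^2 < 0" by (simp add: power2_eq_square algebra_simps)
  then have "poly q \<rho> * poly q \<rho>' < 0" by (simp add: mult_less_0_iff)
  then obtain \<xi> where xi: "\<rho> < \<xi>" "\<xi> < \<rho>'" "poly q \<xi> = 0" using poly_IVT lt by blast
  have f0r: "poly f0 \<rho> = 0" "poly f0 \<rho>' = 0" using assms(1) r'R R_f0 by auto
  have A': "poly q \<rho> * poly f0 \<xi> > 0" using signR[OF assms(1)] xi by (simp add: \<rho>'_def)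
  have B': "poly q \<rho>' * poly f0 \<xi> < 0" using signL[OF assms] xi by (simp add: \<rho>'_def)
  have "poly g0 \<rho> * poly g0 \<xi> = (s * \<rho>) * (poly q \<rho> * poly f0 \<xi>)"
    using f0r xi by (simp add: poly_g0 algebra_simps)
  moreover have "s * \<rho> < 0" using spos R_neg[OF assms(1)] by (simp add: mult_pos_neg)
  ultimately have "poly g0 \<rho> * poly g0 \<xi> < 0" using A' by (simp add: mult_neg_pos)
  then obtain a where a: "\<rho> < a" "a < \<xi>" "poly g0 a = 0" using poly_IVT xi by blast
  have "poly h0 \<xi> * poly h0 \<rho>' = (- (\<kappa> * \<kappa> * t * \<rho>')) * (poly q \<rho>' * poly f0 \<xi>)"
    using f0r xi by (simp add: poly_h0 algebra_simps)
  moreover have "- (\<kappa> * \<kappa> * t * \<rho>') > 0" using kpos tpos R_neg[OF r'R]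
    by (simp add: mult_pos_neg)
  ultimately have "poly h0 \<xi> * poly h0 \<rho>' < 0" using B' by (metis mult_pos_neg)
  then obtain b where b: "\<xi> < b" "b < \<rho>'" "poly h0 b = 0" using poly_IVT xi by blast
  show ?thesis using a b xi by (intro exI[of _ a] exI[of _ b]) (simp add: \<rho>'_def)
qed

lemma last_root:
  assumes "\<rho> = Max R"
  shows "\<exists>a. \<rho> < a \<and> a < 0 \<and> poly g0 a = 0"
proof -
  have rR: "\<rho> \<in> R" using Max_in[OF finR R_ne] assms by simp
  have n0: "nxt \<rho> = 0" using nxt_props(5)[OF rR assms] .
  have neg: "\<rho> < 0" using R_neg[OF rR] .
  define x where "x = \<rho> / 2"
  have x: "\<rho> < x" "x < 0" using neg by (simp_all add: x_def)
  have A: "poly q \<rho> * poly f0 x > 0" using signR[OF rR] x n0 by simp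
  have "poly f0 x * poly f0 0 > 0"
  proof (rule no_root_same_sign)
    show "x \<le> 0" using x by simp
    show "\<forall>z. x \<le> z \<and> z \<le> 0 \<longrightarrow> poly f0 z \<noteq> 0"
    proof (intro allI impI)
      fix z assume z: "x \<le> z \<and> z \<le> 0"
      show "poly f0 z \<noteq> 0"
      proof (cases "z = 0")
        case True then show ?thesis using f0_at0 by simp
      next
        case False then show ?thesis using f0_nonzero_gap[OF rR, of z] z x n0 by simp
      qed
    qed
  qed
  then have "(poly q \<rho> * poly f0 x) * (poly f0 x * poly f0 0) > 0" using A by simp
  then have "(poly q \<rho> * poly f0 0) * (poly f0 x)^2 > 0" by (simp add: power2_eq_square algebra_simps)
  then have C: "poly q \<rho> * poly f0 0 > 0" by (simp add: zero_less_mult_iff)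
  have f0r: "poly f0 \<rho> = 0" using rR R_f0 by auto
  have "poly g0 \<rho> * poly g0 0 = (s * \<rho>) * (poly q \<rho> * poly f0 0)"
    using f0r by (simp add: poly_g0 algebra_simps)
  moreover have "s * \<rho> < 0" using spos neg by (simp add: mult_pos_neg)
  ultimately have "poly g0 \<rho> * poly g0 0 < 0" using C by (simp add: mult_neg_pos)
  then obtain a where "\<rho> < a" "a < 0" "poly g0 a = 0" using poly_IVT neg by blast
  then show ?thesis by blast
qed

lemma lc_f0_h0: "lead_coeff f0 * lead_coeff h0 > 0"
proof -
  have "lead_coeff (D * f0) = lead_coeff D * lead_coeff f0" by (rule lead_coeff_mult)
  then have "lead_coeff f = lead_coeff D * lead_coeff f0" by (simp only: fD[symmetric])
  moreover have "lead_coeff h = lead_coeff D * lead_coeff h0" by (simp add: hD lead_coeff_mult)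
  moreover have "lead_coeff f > 0" using deg_f cpos by simp
  ultimately have "(lead_coeff D * lead_coeff f0) * (lead_coeff D * lead_coeff h0) > 0"
    using lc_h by simp
  then have "(lead_coeff D)^2 * (lead_coeff f0 * lead_coeff h0) > 0"
    by (simp add: power2_eq_square algebra_simps)
  then show ?thesis by (simp add: zero_less_mult_iff)
qed

lemma first_root:
  assumes "t * real m < 1"
  shows "\<exists>b. b < Min R \<and> poly h0 b = 0"
proof -
  define \<rho> where "\<rho> = Min R"
  have rR: "\<rho> \<in> R" using Min_in[OF finR R_ne] by (simp add: \<rho>_def)
  have neg: "\<rho> < 0" using R_neg[OF rR] .
  define x where "x = (\<rho> + nxt \<rho>) / 2"
  have x: "\<rho> < x" "x < nxt \<rho>" using nxt_props(1)[OF rR] by (simp_all add: x_def)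
  have A: "poly q \<rho> * poly f0 x > 0" using signR[OF rR] x by simp
  have f0r: "poly f0 \<rho> = 0" using rR R_f0 by auto
  have hr: "poly h0 \<rho> * poly f0 x = (- (\<kappa> * t * \<rho>)) * (poly q \<rho> * poly f0 x)"
    using f0r by (simp add: poly_h0 algebra_simps)
  have "- (\<kappa> * t * \<rho>) > 0" using kpos tpos neg by (simp add: mult_pos_neg)
  then have hpos: "poly h0 \<rho> * poly f0 x > 0" using hr A by (metis mult_pos_pos)
  have xR: "x \<notin> R" using f0_nonzero_gap[OF rR] x R_f0 by auto
  have set_eq: "{r\<in>R. x < r} = R - {\<rho>}"
  proof
    show "{r\<in>R. x < r} \<subseteq> R - {\<rho>}" using x by auto
    show "R - {\<rho>} \<subseteq> {r\<in>R. x < r}"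
    proof
      fix r assume r: "r \<in> R - {\<rho>}"
      then have "\<rho> \<le> r" using finR by (simp add: \<rho>_def)
      then have "\<rho> < r" using r by auto
      then have "nxt \<rho> \<le> r" using nxt_le rR r by blast
      then show "r \<in> {r\<in>R. x < r}" using r x by auto
    qed
  qed
  have cR: "card {r\<in>R. x < r} = degree f0 - 1" using set_eq card_R rR finR by simp
  have sx: "sgn (poly f0 x) = sgn (lead_coeff f0) * (-1)^(degree f0 - 1)"
    using sign_prod_form[OF f0_form finR xR] cR by simp
  have dh0: "degree h0 = degree f0"
    using deg_split deg_h deg_f assms by simp
  obtain M where M: "\<forall>y\<le>M. sgn (poly h0 y) = sgn (lead_coeff h0) * (-1)^degree h0"
    using minus_infty_sign[OF h0_nz] by blast
  define y where "y = min M (\<rho> - 1)"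
  have y: "y < \<rho>" "y \<le> M" by (simp_all add: y_def)
  have sy: "sgn (poly h0 y) = sgn (lead_coeff h0) * (-1)^degree f0" using M y dh0 by simp
  have sl: "sgn (lead_coeff h0) = sgn (lead_coeff f0)" using lc_f0_h0
    by (auto simp: sgn_if zero_less_mult_iff)
  have pw: "(-1::real)^degree f0 = - ((-1)^(degree f0 - 1))" using deg_f0_pos
    by (metis Suc_diff_1 less_le_trans zero_less_one power_Suc mult_minus1 )
  have "sgn (poly h0 y) = - sgn (poly f0 x)" using sy sx sl pw by simp
  moreover have "sgn (poly h0 \<rho>) = sgn (poly f0 x)" using hpos by (auto simp: sgn_if zero_less_mult_iff)
  moreover have "poly f0 x \<noteq> 0" using hpos by auto
  ultimately have "poly h0 y * poly h0 \<rho> < 0"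
    by (cases "poly f0 x > 0") (auto simp: sgn_if mult_less_0_iff split: if_splits)
  then obtain b where "y < b" "b < \<rho>" "poly h0 b = 0" using poly_IVT y by blast
  then show ?thesis by (auto simp: \<rho>_def)
qed

end


context rsetting begin

definition "pr \<rho> = (SOME p. \<rho> < fst p \<and> fst p < snd p \<and> snd p < nxt \<rho> \<and> poly g0 (fst p) = 0 \<and> poly h0 (snd p) = 0)"
definition "al \<rho> = (if \<rho> = Max R then (SOME a. \<rho> < a \<and> a < 0 \<and> poly g0 a = 0) else fst (pr \<rho>))"
definition "be \<rho> = snd (pr \<rho>)"
definition "b0 = (SOME b. b < Min R \<and> poly h0 b = 0)"
definition "R' = R - {Max R}"
definition "G0 = al ` R"
definition "H0 = be ` R' \<union> (if t * real m < 1 then {b0} else {})"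

lemma pr_prop:
  assumes "\<rho> \<in> R" "\<rho> \<noteq> Max R"
  shows "\<rho> < fst (pr \<rho>) \<and> fst (pr \<rho>) < snd (pr \<rho>) \<and> snd (pr \<rho>) < nxt \<rho> \<and> poly g0 (fst (pr \<rho>)) = 0 \<and> poly h0 (snd (pr \<rho>)) = 0"
proof -
  obtain a b where "\<rho> < a \<and> a < b \<and> b < nxt \<rho> \<and> poly g0 a = 0 \<and> poly h0 b = 0"
    using gap_roots[OF assms] by blast
  then have "\<exists>p. \<rho> < fst p \<and> fst p < snd p \<and> snd p < nxt \<rho> \<and> poly g0 (fst p) = 0 \<and> poly h0 (snd p) = 0"
    by (intro exI[of _ "(a, b)"]) simp
  then show ?thesis unfolding pr_def by (rule someI_ex)
qed

lemma al_prop: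
  assumes "\<rho> \<in> R"
  shows "\<rho> < al \<rho> \<and> al \<rho> < nxt \<rho> \<and> poly g0 (al \<rho>) = 0"
proof (cases "\<rho> = Max R")
  case True
  have ex: "\<exists>a. \<rho> < a \<and> a < 0 \<and> poly g0 a = 0" using last_root[OF True] .
  have "al \<rho> = (SOME a. \<rho> < a \<and> a < 0 \<and> poly g0 a = 0)" using True by (simp add: al_def)
  then have "\<rho> < al \<rho> \<and> al \<rho> < 0 \<and> poly g0 (al \<rho>) = 0" using someI_ex[OF ex] by simp
  then show ?thesis using nxt_props(5)[OF assms True] by simp
next
  case False
  then show ?thesis using pr_prop[OF assms False] by (simp add: al_def)
qed

lemma be_prop:
  assumes "\<rho> \<in> R'"
  shows "al \<rho> < be \<rho> \<and> be \<rho> < nxt \<rho> \<and> poly h0 (be \<rho>) = 0 \<and> nxt \<rho> \<in> R"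
proof -
  have r: "\<rho> \<in> R" "\<rho> \<noteq> Max R" using assms by (auto simp: R'_def)
  show ?thesis using pr_prop[OF r] nxt_props(4)[OF r] r by (simp add: al_def be_def)
qed

lemma b0_prop:
  assumes "t * real m < 1"
  shows "b0 < Min R \<and> poly h0 b0 = 0"
  using first_root[OF assms] unfolding b0_def by (rule someI_ex)

lemma al_lt: "\<rho>1 \<in> R \<Longrightarrow> \<rho>2 \<in> R \<Longrightarrow> \<rho>1 < \<rho>2 \<Longrightarrow> al \<rho>1 < \<rho>2"
  using al_prop nxt_le by (meson less_le_trans)

lemma be_lt: "\<rho>1 \<in> R' \<Longrightarrow> \<rho>2 \<in> R \<Longrightarrow> \<rho>1 < \<rho>2 \<Longrightarrow> be \<rho>1 < \<rho>2"
  using be_prop nxt_le by (metis R'_def DiffD1 less_le_trans)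

lemma al_gt: "\<rho> \<in> R \<Longrightarrow> \<rho> < al \<rho>" using al_prop by blast
lemma be_gt: "\<rho> \<in> R' \<Longrightarrow> \<rho> < be \<rho>"
  using be_prop al_prop by (metis R'_def DiffD1 less_trans)

lemma R'_sub: "R' \<subseteq> R" by (auto simp: R'_def)

lemma b0_lt: "t * real m < 1 \<Longrightarrow> \<rho> \<in> R \<Longrightarrow> b0 < \<rho>"
  using b0_prop Min_le[OF finR] by (meson less_le_trans)

lemma inj_al: "inj_on al R"
proof (rule inj_onI)
  fix x y assume xy: "x \<in> R" "y \<in> R" "al x = al y"
  show "x = y"
  proof (rule ccontr)
    assume "x \<noteq> y"
    then consider "x < y" | "y < x" by linarith
    then show False
    proof cases
      case 1 then show False using al_lt[OF xy(1,2) 1] al_gt[OF xy(2)] xy(3) by simp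
    next
      case 2 then show False using al_lt[OF xy(2,1) 2] al_gt[OF xy(1)] xy(3) by simp
    qed
  qed
qed

lemma inj_be: "inj_on be R'"
proof (rule inj_onI)
  fix x y assume xy: "x \<in> R'" "y \<in> R'" "be x = be y"
  have xR: "x \<in> R" "y \<in> R" using xy R'_sub by auto
  show "x = y"
  proof (rule ccontr)
    assume "x \<noteq> y"
    then consider "x < y" | "y < x" by linarith
    then show False
    proof cases
      case 1 then show False using be_lt[OF xy(1) xR(2) 1] be_gt[OF xy(2)] xy(3) by simp
    next
      case 2 then show False using be_lt[OF xy(2) xR(1) 2] be_gt[OF xy(1)] xy(3) by simp
    qed
  qed
qed

lemma card_G0: "card G0 = card R" using card_image[OF inj_al] by (simp add: G0_def)

lemma card_R': "card R' + 1 = card R"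
  using finR R_ne Max_in[OF finR R_ne] card_gt_0_iff[of R] by (simp add: R'_def)

lemma finR': "finite R'" using finR by (simp add: R'_def)

lemma b0_notin: "t * real m < 1 \<Longrightarrow> b0 \<notin> be ` R'"
proof
  assume tm: "t * real m < 1" and "b0 \<in> be ` R'"
  then obtain \<rho> where r: "\<rho> \<in> R'" "b0 = be \<rho>" by auto
  then show False using b0_lt[OF tm, of \<rho>] be_gt[OF r(1)] R'_sub by auto
qed

lemma card_H0: "card H0 = (if t * real m < 1 then card R else card R - 1)"
proof (cases "t * real m < 1")
  case True
  have "card H0 = card (insert b0 (be ` R'))" using True by (simp add: H0_def)
  also have "\<dots> = Suc (card (be ` R'))" using b0_notin[OF True] finR' by simp
  also have "\<dots> = card R" using card_image[OF inj_be] card_R' by simp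
  finally show ?thesis using True by simp
next
  case False
  then have "card H0 = card (be ` R')" by (simp add: H0_def)
  also have "\<dots> = card R - 1" using card_image[OF inj_be] card_R' by simp
  finally show ?thesis using False by simp
qed

lemma deg_g0: "degree g0 = card R"
  using deg_split deg_g deg_f card_R by simp

lemma deg_h0: "degree h0 = card H0"
  using deg_split deg_h deg_f card_R card_H0 deg_f0_pos by auto

lemma G0_roots: "\<forall>x\<in>G0. poly g0 x = 0" using al_prop by (auto simp: G0_def)
lemma H0_roots: "\<forall>x\<in>H0. poly h0 x = 0"
  using be_prop b0_prop by (auto simp: H0_def split: if_splits)

lemma finG0: "finite G0" using finR by (simp add: G0_def)
lemma finH0: "finite H0" using finR' by (simp add: H0_def)

lemma g0_form: "g0 = smult (lead_coeff g0) (\<Prod>r\<in>G0. [:-r,1:])"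
  using split_roots[OF g0_nz finG0 G0_roots] card_G0 deg_g0 by simp

lemma h0_form: "h0 = smult (lead_coeff h0) (\<Prod>r\<in>H0. [:-r,1:])"
  using split_roots[OF h0_nz finH0 H0_roots] deg_h0 by simp

lemma g0_props: "real_rooted g0 \<and> rsquarefree g0 \<and> {x. poly g0 x = 0} = G0"
proof -
  have lc: "lead_coeff g0 \<noteq> 0" using g0_nz by simp
  show ?thesis using prod_form_props[OF g0_form lc finG0] prod_form_roots[OF g0_form lc finG0] by blast
qed

lemma h0_props: "real_rooted h0 \<and> rsquarefree h0 \<and> {x. poly h0 x = 0} = H0"
proof -
  have lc: "lead_coeff h0 \<noteq> 0" using h0_nz by simp
  show ?thesis using prod_form_props[OF h0_form lc finH0] prod_form_roots[OF h0_form lc finH0] by blast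
qed

lemma g0_root_iff: "poly g0 x = 0 \<longleftrightarrow> x \<in> G0" using g0_props by blast
lemma h0_root_iff: "poly h0 x = 0 \<longleftrightarrow> x \<in> H0" using h0_props by blast

lemma H0_cases:
  assumes "u \<in> H0"
  obtains \<rho> where "\<rho> \<in> R'" "u = be \<rho>" | "t * real m < 1" "u = b0"
  using assms by (auto simp: H0_def split: if_splits)

lemma disjoint: "G0 \<inter> H0 = {}"
proof (rule ccontr)
  assume "G0 \<inter> H0 \<noteq> {}"
  then obtain u where uG: "u \<in> G0" and uH: "u \<in> H0" by blast
  from uG obtain \<rho>1 where r1: "\<rho>1 \<in> R" "u = al \<rho>1" by (auto simp: G0_def)
  from uH show False
  proof (cases rule: H0_cases)
    case (1 \<rho>2)
    have r2: "\<rho>2 \<in> R" using 1 R'_sub by auto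
    consider "\<rho>1 = \<rho>2" | "\<rho>1 < \<rho>2" | "\<rho>2 < \<rho>1" by linarith
    then show False
    proof cases
      case 1 then show False using be_prop[OF \<open>\<rho>2 \<in> R'\<close>] r1 \<open>u = be \<rho>2\<close> by simp
    next
      case 2 then show False using al_lt[OF r1(1) r2 2] be_gt[OF \<open>\<rho>2 \<in> R'\<close>] r1 \<open>u = be \<rho>2\<close> by simp
    next
      case 3 then show False using be_lt[OF \<open>\<rho>2 \<in> R'\<close> r1(1) 3] al_gt[OF r1(1)] r1 \<open>u = be \<rho>2\<close> by simp
    qed
  next
    case 2
    then show False using b0_lt[OF 2(1) r1(1)] al_gt[OF r1(1)] r1 by simp
  qed
qed

lemma between_G:
  assumes "a \<in> G0" "b \<in> G0" "a < b"
  shows "\<exists>c. a < c \<and> c < b \<and> c \<in> H0"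
proof -
  obtain \<rho>1 \<rho>2 where r: "\<rho>1 \<in> R" "\<rho>2 \<in> R" "a = al \<rho>1" "b = al \<rho>2"
    using assms by (auto simp: G0_def)
  have "\<rho>1 < \<rho>2"
  proof (rule ccontr)
    assume "\<not> \<rho>1 < \<rho>2"
    then consider "\<rho>1 = \<rho>2" | "\<rho>2 < \<rho>1" by linarith
    then show False
    proof cases
      case 1 then show False using r assms(3) by simp
    next
      case 2 then show False using al_lt[OF r(2,1) 2] al_gt[OF r(1)] r assms(3) by simp
    qed
  qed
  have "\<rho>1 \<noteq> Max R" using \<open>\<rho>1 < \<rho>2\<close> Max_ge[OF finR r(2)] by linarith
  then have r1': "\<rho>1 \<in> R'" using r(1) by (simp add: R'_def)
  have "a < be \<rho>1" using be_prop[OF r1'] r by simp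
  moreover have "be \<rho>1 < b" using be_lt[OF r1' r(2) \<open>\<rho>1 < \<rho>2\<close>] al_gt[OF r(2)] r by simp
  moreover have "be \<rho>1 \<in> H0" using r1' by (simp add: H0_def)
  ultimately show ?thesis by blast
qed

lemma al_lt_be: "\<rho>1 \<in> R \<Longrightarrow> \<rho>2 \<in> R' \<Longrightarrow> \<rho>1 \<le> \<rho>2 \<Longrightarrow> al \<rho>1 < be \<rho>2"
proof -
  assume a: "\<rho>1 \<in> R" "\<rho>2 \<in> R'" "\<rho>1 \<le> \<rho>2"
  show "al \<rho>1 < be \<rho>2"
  proof (cases "\<rho>1 = \<rho>2")
    case True then show ?thesis using be_prop[OF a(2)] by simp
  next
    case False
    then have "\<rho>1 < \<rho>2" using a by simp
    then show ?thesis using al_lt[OF a(1) _ \<open>\<rho>1 < \<rho>2\<close>] be_gt[OF a(2)] R'_sub a(2) by force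
  qed
qed

lemma between_H:
  assumes "a \<in> H0" "b \<in> H0" "a < b"
  shows "\<exists>c. a < c \<and> c < b \<and> c \<in> G0"
proof -
  from assms(2) show ?thesis
  proof (cases rule: H0_cases)
    case 2
    note b2 = 2
    from assms(1) show ?thesis
    proof (cases rule: H0_cases)
      case (1 \<rho>1)
      have "b0 < \<rho>1" using b0_lt[OF b2(1)] 1(1) R'_sub by auto
      then show ?thesis using be_gt[OF 1(1)] 1 b2 assms(3) by simp
    next
      case 2
      then show ?thesis using b2 assms(3) by simp
    qed
  next
    case (1 \<rho>2)
    have r2: "\<rho>2 \<in> R" using 1 R'_sub by auto
    from assms(1) show ?thesis
    proof (cases rule: H0_cases)
      case (1 \<rho>1)
      note h1 = 1
      have r1: "\<rho>1 \<in> R" using h1 R'_sub by auto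
      have "\<rho>1 < \<rho>2"
      proof (rule ccontr)
        assume "\<not> \<rho>1 < \<rho>2"
        then consider "\<rho>1 = \<rho>2" | "\<rho>2 < \<rho>1" by linarith
        then show False
        proof cases
          case 1 then show False using h1 \<open>b = be \<rho>2\<close> assms(3) by simp
        next
          case 2 then show False using be_lt[OF \<open>\<rho>2 \<in> R'\<close> r1 2] be_gt[OF h1(1)] h1 \<open>b = be \<rho>2\<close> assms(3) by simp
        qed
      qed
      define \<sigma> where "\<sigma> = nxt \<rho>1"
      have sR: "\<sigma> \<in> R" and bs: "be \<rho>1 < \<sigma>" using be_prop[OF h1(1)] by (simp_all add: \<sigma>_def)
      have "\<sigma> \<le> \<rho>2" using nxt_le[OF r1 r2 \<open>\<rho>1 < \<rho>2\<close>] by (simp add: \<sigma>_def)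
      then have "al \<sigma> < be \<rho>2" using al_lt_be[OF sR \<open>\<rho>2 \<in> R'\<close>] by simp
      moreover have "a < al \<sigma>" using bs al_gt[OF sR] h1 by simp
      moreover have "al \<sigma> \<in> G0" using sR by (simp add: G0_def)
      ultimately show ?thesis using \<open>b = be \<rho>2\<close> by blast
    next
      case 2
      define \<sigma> where "\<sigma> = Min R"
      have sR: "\<sigma> \<in> R" using Min_in[OF finR R_ne] by (simp add: \<sigma>_def)
      have "\<sigma> \<le> \<rho>2" using Min_le[OF finR r2] by (simp add: \<sigma>_def)
      then have "al \<sigma> < be \<rho>2" using al_lt_be[OF sR \<open>\<rho>2 \<in> R'\<close>] by simp
      moreover have "a < al \<sigma>" using b0_lt[OF 2(1) sR] al_gt[OF sR] 2 by simp
      moreover have "al \<sigma> \<in> G0" using sR by (simp add: G0_def)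
      ultimately show ?thesis using \<open>b = be \<rho>2\<close> by blast
    qed
  qed
qed

lemma strict_g0_h0: "interlace_strict g0 h0"
  unfolding interlace_strict_def
proof (intro conjI)
  show "real_rooted g0" "rsquarefree g0" using g0_props by auto
  show "real_rooted h0" "rsquarefree h0" using h0_props by auto
  show "\<forall>x. \<not> (poly g0 x = 0 \<and> poly h0 x = 0)" using disjoint g0_root_iff h0_root_iff by blast
  show "one_between g0 h0"
    by (rule one_between_I[OF h0_nz]) (use between_G between_H in \<open>auto simp: g0_root_iff h0_root_iff\<close>)
  show "one_between h0 g0"
    by (rule one_between_I[OF g0_nz]) (use between_G between_H in \<open>auto simp: g0_root_iff h0_root_iff\<close>)
qed

lemma rr_D: "real_rooted D"
proof -
  have "D dvd f" by (simp add: D_def)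
  then show ?thesis using real_rooted_dvd[OF rr _ f_nz] by blast
qed

lemma rr_g: "real_rooted g" using real_rooted_mult[OF rr_D] g0_props gD by simp
lemma rr_h: "real_rooted h" using real_rooted_mult[OF rr_D] h0_props hD by simp

lemma B_nonstrict: "interlace_nonstrict g h"
  unfolding interlace_nonstrict_def g_div h_div using rr_g rr_h strict_g0_h0 by simp

lemma B_strict: "rsquarefree f \<Longrightarrow> interlace_strict g h"
proof -
  assume "rsquarefree f"
  then have "D = 1" using D_one_if_sqf rr by blast
  then have "g = g0" "h = h0" using gD hD by simp_all
  then show ?thesis using strict_g0_h0 by simp
qed

lemma B_zr: "zr h 1 \<le> zr g 1"
proof (cases "degree h < 1")
  case True then show ?thesis by (simp add: zr_def)
next
  case False
  then obtain y where "poly h y = 0" using real_rooted_has_root[OF rr_h] by auto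
  then obtain r where r: "zr h 1 = ereal r" "poly h r = 0"
    using zr1_char[OF h_nz _ _ neg_zeros_h] False by force
  define M where "M = Max R"
  have MR: "M \<in> R" using Max_in[OF finR R_ne] by (simp add: M_def)
  have gal: "poly g (al M) = 0" using al_prop[OF MR] gD by simp
  obtain r' where r': "zr g 1 = ereal r'" "\<forall>y. poly g y = 0 \<longrightarrow> y \<le> r'"
    using zr1_char[OF g_nz _ gal neg_zeros_g] deg_g m1 by force
  have "r < al M"
  proof -
    have "poly D r = 0 \<or> poly h0 r = 0" using r(2) hD by simp
    then show ?thesis
    proof
      assume "poly D r = 0"
      then have "poly (D * f0) r = 0" by simp
      then have "poly f r = 0" by (simp only: fD[symmetric])
      then have "r \<in> R" by (simp add: R_def)
      then have "r \<le> M" using Max_ge[OF finR] by (simp add: M_def)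
      then show ?thesis using al_gt[OF MR] by simp
    next
      assume "poly h0 r = 0"
      then have "r \<in> H0" using h0_root_iff by simp
      then show ?thesis
      proof (cases rule: H0_cases)
        case (1 \<rho>)
        have "be \<rho> < nxt \<rho>" "nxt \<rho> \<in> R" using be_prop[OF 1(1)] by auto
        then have "be \<rho> < M" using Max_ge[OF finR] by (metis M_def less_le_trans)
        then show ?thesis using 1 al_gt[OF MR] by simp
      next
        case 2
        then show ?thesis using b0_lt[OF 2(1) MR] al_gt[OF MR] by simp
      qed
    qed
  qed
  then have "r \<le> r'" using r'(2) gal by force
  then show ?thesis using r r' by simp
qed

end


definition Cphi :: "nat \<Rightarrow> real \<Rightarrow> real \<Rightarrow> nat \<Rightarrow> real" where
  "Cphi n a b k = pochhammer (a + 1) n / fact n *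
            (pochhammer (- real n) (2*k) * pochhammer (real n + a + b + 1) (2*k)
              / pochhammer (a + 1) (2*k)) * (1/4) ^ k"

lemma coeff_phi: "coeff (phi n a b) i = (if i \<le> n div 2 then Cphi n a b i else 0)"
  unfolding phi_def Cphi_def by (simp add: coeff_sum coeff_monom)

lemma poch_neg_even_pos:
  assumes "2 * k \<le> n"
  shows "pochhammer (- real n) (2*k) > 0"
proof -
  have "pochhammer (- real n) (2*k) = (-1)^(2*k) * pochhammer (real n - real (2*k) + 1) (2*k)"
    by (rule pochhammer_minus)
  also have "\<dots> = pochhammer (real n - real (2*k) + 1) (2*k)" by simp
  also have "\<dots> > 0" using assms by (intro pochhammer_pos) simp
  finally show ?thesis .
qed

lemma Cphi_pos:
  assumes "a > -1" "real n + a + b + 1 > 0" "k \<le> n div 2"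
  shows "Cphi n a b k > 0"
proof -
  have "2 * k \<le> n" using assms(3) by simp
  then have "pochhammer (- real n) (2*k) > 0" by (rule poch_neg_even_pos)
  moreover have "pochhammer (a + 1) n > 0" "pochhammer (a + 1) (2*k) > 0"
    using assms(1) by (simp_all add: pochhammer_pos)
  moreover have "pochhammer (real n + a + b + 1) (2*k) > 0" using assms(2) by (simp add: pochhammer_pos)
  ultimately show ?thesis unfolding Cphi_def by simp
qed

lemma poch_shift: "x * pochhammer (x + 1) j = pochhammer x j * (x + real j)"
proof -
  have a: "pochhammer x (Suc j) = x * pochhammer (x + 1) j" by (rule pochhammer_rec)
  have b: "pochhammer x (Suc j) = pochhammer x j * (x + of_nat j)" by (rule pochhammer_Suc)
  from a b show ?thesis by (rule trans[OF sym])
qed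

lemma alg_G:
  fixes A F PN PB1 PB0 PA Q N k :: real
  assumes "N > 0" "N * PB1 = PB0 * (N + 2 * k)"
  shows "A / F * (PN * PB1 / PA) * Q = A / F * (PN * PB0 / PA) * Q * (1 + 2 / N * k)"
proof -
  have "PB1 = PB0 * (N + 2 * k) / N" using assms by (simp add: divide_simps mult.commute)
  also have "\<dots> = PB0 * (1 + 2 / N * k)" using assms by (simp add: divide_simps)
  finally show ?thesis by simp
qed
lemma Cphi_G:
  assumes "real n + a + b > 0"
  shows "Cphi n a b k = Cphi n a (b - 1) k * (1 + 2 / (real n + a + b) * real k)"
proof -
  define N where "N = real n + a + b"
  have N: "N > 0" using assms by (simp add: N_def)
  have e0: "real n + a + (b - 1) + 1 = N" by (simp add: N_def)
  have e1: "real n + a + b + 1 = N + 1" by (simp add: N_def)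
  have e': "N * pochhammer (N + 1) (2*k) = pochhammer N (2*k) * (N + real (2*k))"
    by (rule poch_shift)
  have r2: "real (2*k) = 2 * real k" by simp
  have e: "N * pochhammer (N + 1) (2*k) = pochhammer N (2*k) * (N + 2 * real k)"
    using e' unfolding r2 .
  have "Cphi n a b k = pochhammer (a + 1) n / fact n *
            (pochhammer (- real n) (2*k) * pochhammer (N + 1) (2*k)
              / pochhammer (a + 1) (2*k)) * (1/4) ^ k" unfolding Cphi_def e1 by (rule refl)
  also have "\<dots> = pochhammer (a + 1) n / fact n *
            (pochhammer (- real n) (2*k) * pochhammer N (2*k)
              / pochhammer (a + 1) (2*k)) * (1/4) ^ k * (1 + 2 / N * real k)"
    by (rule alg_G[OF N e])
  also have "pochhammer (a + 1) n / fact n *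
            (pochhammer (- real n) (2*k) * pochhammer N (2*k)
              / pochhammer (a + 1) (2*k)) * (1/4) ^ k * (1 + 2 / N * real k) = Cphi n a (b - 1) k * (1 + 2 / N * real k)"
    unfolding Cphi_def e0 by (rule refl)
  finally show ?thesis unfolding N_def .
qed

lemma alg_H:
  fixes A F PN PB PA Q a n k :: real
  assumes "n > 0" "n + a > 0" "F > 0" "PA > 0"
  shows "(A / (a + n)) / (F / n) * (PN * ((n - 2 * k) / n) * PB / PA) * Q
       = n / (n + a) * (A / F * (PN * PB / PA) * Q * (1 - 2 / n * k))"
proof -
  have nz: "a + n \<noteq> 0" "n + a \<noteq> 0" "F \<noteq> 0" "PA \<noteq> 0" "n \<noteq> 0" using assms by auto
  have e1: "(A / (a + n)) / (F / n) = n / (n + a) * (A / F)" using nz by (simp add: divide_simps add.commute)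
  have e2: "(n - 2 * k) / n = 1 - 2 / n * k" using nz by (simp add: diff_divide_distrib)
  show ?thesis unfolding e1 e2 by (simp only: mult_ac times_divide_eq_left times_divide_eq_right divide_divide_eq_left)
qed
lemma Cphi_H:
  assumes "n \<ge> 1" "a > -1"
  shows "Cphi (n - 1) a b k = (real n / (real n + a)) * (Cphi n a (b - 1) k * (1 - 2 / real n * real k))"
proof -
  obtain j where j: "n = Suc j" using assms(1) by (cases n) auto
  have na: "real n + a > 0" using assms by simp
  have p1: "pochhammer (a + 1) n = pochhammer (a + 1) j * (a + real n)"
    unfolding j pochhammer_Suc by (simp add: algebra_simps)
  have f1: "fact n = real n * fact j" unfolding j by simp
  have p2: "(- real n) * pochhammer (- real n + 1) (2*k) = pochhammer (- real n) (2*k) * (- real n + real (2*k))"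
    by (rule poch_shift)
  have p2': "pochhammer (- real j) (2*k) = pochhammer (- real n) (2*k) * ((real n - 2 * real k) / real n)"
  proof -
    have "- real j = - real n + 1" by (simp add: j)
    then have "(- real n) * pochhammer (- real j) (2*k) = pochhammer (- real n) (2*k) * (- real n + 2 * real k)"
      using p2 by simp
    then show ?thesis using assms(1) by (simp add: divide_simps algebra_simps)
  qed
  have nb: "real j + a + b + 1 = real n + a + (b - 1) + 1" by (simp add: j)
  have "Cphi (n - 1) a b k = pochhammer (a + 1) j / fact j *
            (pochhammer (- real j) (2*k) * pochhammer (real n + a + (b - 1) + 1) (2*k)
              / pochhammer (a + 1) (2*k)) * (1/4) ^ k"
    unfolding Cphi_def j by (simp add: nb[unfolded j])
  also have "\<dots> = (pochhammer (a + 1) n / (a + real n)) / (fact n / real n) *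
            (pochhammer (- real n) (2*k) * ((real n - 2 * real k) / real n) * pochhammer (real n + a + (b - 1) + 1) (2*k)
              / pochhammer (a + 1) (2*k)) * (1/4) ^ k"
  proof -
    have e1: "pochhammer (a + 1) j = pochhammer (a + 1) n / (a + real n)" using p1 na by (simp add: divide_simps)
    have e2: "fact j = fact n / real n" using f1 assms(1) by simp
    show ?thesis by (simp only: e1 e2 p2')
  qed
  also have "\<dots> = (real n / (real n + a)) * (Cphi n a (b - 1) k * (1 - 2 / real n * real k))"
    unfolding Cphi_def
    by (rule alg_H) (use na assms in \<open>simp_all add: pochhammer_pos\<close>)
  finally show ?thesis .
qed



theorem lemma2:
  fixes n :: nat and a b :: real
  assumes "n \<ge> 4" and "a > -1" and "real n + a + b > 0"
  shows "((neg_zeros (phi n a b) \<and> neg_zeros (phi (n - 1) a b) \<and>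
           interlace_nonstrict (phi n a b) (phi (n - 1) a b))
          \<longleftrightarrow> real_rooted (phi n a (b - 1)))
       \<and> ((neg_zeros (phi n a b) \<and> neg_zeros (phi (n - 1) a b) \<and>
           interlace_strict (phi n a b) (phi (n - 1) a b))
          \<longleftrightarrow> real_rooted (phi n a (b - 1)) \<and> rsquarefree (phi n a (b - 1)))
       \<and> (real_rooted (phi n a (b - 1)) \<longrightarrow> zr (phi (n - 1) a b) 1 \<le> zr (phi n a b) 1)"
proof -
  define f where "f = phi n a (b - 1)"
  define m where "m = n div 2"
  define s where "s = 2 / (real n + a + b)"
  define t where "t = 2 / real n"
  define \<kappa> where "\<kappa> = real n / (real n + a)"
  have n0: "real n > 0" using assms(1) by simp
  have na: "real n + a > 0" using assms(1,2) by simp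
  have m1: "m \<ge> 1" using assms(1) by (simp add: m_def)
  have coeff_f: "coeff f k = (if k \<le> n div 2 then Cphi n a (b - 1) k else 0)" for k
    by (simp add: f_def coeff_phi)
  interpret S: setting f m s t \<kappa>
  proof
    show "1 \<le> m" by (rule m1)
    show "coeff f k > 0" if "k \<le> m" for k
      using Cphi_pos[of a n "b - 1" k] that assms by (simp add: f_def coeff_phi m_def)
    show "coeff f k = 0" if "m < k" for k
      using that by (simp add: f_def coeff_phi m_def)
    show "s > 0" using assms(3) by (simp add: s_def)
    show "t > 0" using n0 by (simp add: t_def)
    show "\<kappa> > 0" using n0 na by (simp add: \<kappa>_def)
    show "t * real k < 1" if "k < m" for k
    proof -
      have "2 * k < n" using that by (simp add: m_def)
      then have "2 * real k < real n" by linarith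
      then show ?thesis using n0 by (simp add: t_def divide_simps)
    qed
    show "t * real m \<le> 1"
    proof -
      have "2 * m \<le> n" by (simp add: m_def)
      then have "2 * real m \<le> real n" by linarith
      then show ?thesis using n0 by (simp add: t_def divide_simps)
    qed
  qed
  have G: "phi n a b = S.g"
  proof (rule poly_eqI)
    fix k
    show "coeff (phi n a b) k = coeff S.g k"
      unfolding S.coeff_g
      using Cphi_G[OF assms(3), of k] by (simp add: coeff_f coeff_phi s_def)
  qed
  have H: "phi (n - 1) a b = S.h"
  proof (rule poly_eqI)
    fix k
    have hk: "coeff S.h k = \<kappa> * (coeff f k * (1 - t * real k))" by (rule S.coeff_h)
    show "coeff (phi (n - 1) a b) k = coeff S.h k"
    proof (cases "k \<le> (n - 1) div 2")
      case True
      then have "k \<le> n div 2" by linarith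
      then show ?thesis using True Cphi_H[of n a b k] assms hk
        by (simp add: coeff_f coeff_phi t_def \<kappa>_def)
    next
      case False
      show ?thesis
      proof (cases "k \<le> n div 2")
        case True
        with False have "2 * k = n" by linarith
        then have "1 - t * real k = 0" using n0 by (simp add: t_def divide_simps)
        then show ?thesis using False hk by (simp add: coeff_phi)
      next
        case False2: False
        then show ?thesis using False hk by (simp add: coeff_phi coeff_f)
      qed
    qed
  qed
  have ngh: "neg_zeros (phi n a b)" "neg_zeros (phi (n - 1) a b)"
    using S.neg_zeros_g S.neg_zeros_h G H by simp_all
  have B: "interlace_nonstrict S.g S.h \<and> zr S.h 1 \<le> zr S.g 1 \<and> (rsquarefree f \<longrightarrow> interlace_strict S.g S.h)"
    if rr: "real_rooted f"
  proof -
    interpret R: rsetting f m s t \<kappa>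
      by (intro rsetting.intro S.setting_axioms rsetting_axioms.intro rr)
    show ?thesis using R.B_nonstrict R.B_zr R.B_strict by blast
  qed
  show ?thesis
    unfolding f_def[symmetric] G H
    using S.neg_zeros_g S.neg_zeros_h S.A_nonstrict S.A_strict B by blast
qed


end
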